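(* Let $\Omega\subseteq S^{n-1}$ be a closed set not contained in any closed hemisphere of $S^{n-1}$, let $\Psi\in\mathcal C_I\cup\mathcal C_d$, $f\in C^+(\Omega)$, $g\in C(\Omega)$, and for $|\varepsilon|$ sufficiently small let $f_\varepsilon\in C^+(\Omega)$ be defined by $\Psi(\xi,f_\varepsilon(\xi))=\Psi(\xi,f(\xi))+\varepsilon g(\xi)$, $\xi\in\Omega$. (i) For $v\in S^{n-1}\setminus\eta_{\langle f\rangle}$, letting $u_0=\alpha_{\langle f\rangle^*}(v)$, $$\lim_{\varepsilon\to0}\frac{\log h_{\langle f_\varepsilon\rangle}(v)-\log h_{\langle f\rangle}(v)}{\varepsilon}=\frac{g(u_0)}{f(u_0)\Psi_t(u_0,f(u_0))}.$$ (ii) For $\xi\in S^{n-1}\setminus\eta_{\langle 1/f\rangle}$, letting $u_1=\alpha_{[f]}(\xi)$, $$\lim_{\varepsilon\to0}\frac{\log\rho_{[f_\varepsilon]}(\xi)-\log\rho_{[f]}(\xi)}{\varepsilon}=\frac{g(u_1)}{f(u_1)\Psi_t(u_1,f(u_1))}.$$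
   Context: $S^{n-1}$ is the unit sphere of $\mathbb R^n$, $n\ge2$. $\mathscr K^n_{(o)}$ is the set of compact convex sets in $\mathbb R^n$ with the origin in their interior. For $K\in\mathscr K^n_{(o)}$: $h_K(x)=\max\{x\cdot y:y\in K\}$, $\rho_K(x)=\max\{t\ge0:tx\in K\}$, $K^*=\{x:x\cdot y\le1\ \forall y\in K\}$. $\eta_K$ is the set of $u\in S^{n-1}$ for which $\{x\in\partial K:x\cdot u=h_K(u)\}$ contains two or more points. For $\xi\in S^{n-1}$, $\pmb\alpha_K(\xi)$ is the set of outer unit normals of $K$ at $\rho_K(\xi)\xi$; for $v\notin\eta_K$ the set $\pmb\alpha_{K^*}(v)$ is a singleton, written $\{\alpha_{K^*}(v)\}$ (and, in particular, $\alpha_{\langle f\rangle^*}(v)$ for $v\notin\eta_{\langle f\rangle}$, $\alpha_{[f]}(\xi)$ for $\xi\notin\eta_{\langle1/f\rangle}$, noting $[f]=\langle 1/f\rangle^*$, are well-defined and lie in $\Omega$). $\mathcal C$ is the set of $G:S^{n-1}\times(0,\infty)\to\mathbb R$ with $G$ and $G_t=\partial G/\partial t$ continuous; $\mathcal C_I=\{G\in\mathcal C:G_t>0\}$, $\mathcal C_d=\{G\in\mathcal C:G_t<0\}$. $C(\Omega)$: continuous functions on $\Omega$; $C^+(\Omega)$: strictly positive ones. For $f\in C^+(\Omega)$: $[f]=\bigcap_{\xi\in\Omega}\{x:x\cdot\xi\le f(\xi)\}$ and $\langle f\rangle=\mathrm{conv}\{f(\xi)\xi:\xi\in\Omega\}$.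 *)

theory Defs
  imports "HOL-Analysis.Analysis"
begin

definition supp_fun :: "'a::euclidean_space set \<Rightarrow> 'a \<Rightarrow> real" where
  "supp_fun K x = Sup ((\<lambda>y. x \<bullet> y) ` K)"

definition radial_fun :: "'a::euclidean_space set \<Rightarrow> 'a \<Rightarrow> real" where
  "radial_fun K x = Sup {t. t \<ge> 0 \<and> t *\<^sub>R x \<in> K}"

definition polar :: "'a::euclidean_space set \<Rightarrow> 'a set" where
  "polar K = {x. \<forall>y\<in>K. x \<bullet> y \<le> 1}"

definition eta :: "'a::euclidean_space set \<Rightarrow> 'a set" where
  "eta K = {u \<in> sphere 0 1. \<exists>x y. x \<noteq> y \<and>
      x \<in> frontier K \<and> x \<bullet> u = supp_fun K u \<and>
      y \<in> frontier K \<and> y \<bullet> u = supp_fun K u}"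

definition radial_gauss :: "'a::euclidean_space set \<Rightarrow> 'a \<Rightarrow> 'a set" where
  "radial_gauss K \<xi> = {u \<in> sphere 0 1.
      u \<bullet> (radial_fun K \<xi> *\<^sub>R \<xi>) = supp_fun K u}"

definition radial_gauss1 :: "'a::euclidean_space set \<Rightarrow> 'a \<Rightarrow> 'a" where
  "radial_gauss1 K \<xi> = (THE u. u \<in> radial_gauss K \<xi>)"

definition wulff :: "'a::euclidean_space set \<Rightarrow> ('a \<Rightarrow> real) \<Rightarrow> 'a set" where
  "wulff \<Omega> f = (\<Inter>\<xi>\<in>\<Omega>. {x. x \<bullet> \<xi> \<le> f \<xi>})"

definition conv_hull_fun :: "'a::euclidean_space set \<Rightarrow> ('a \<Rightarrow> real) \<Rightarrow> 'a set" where
  "conv_hull_fun \<Omega> f = convex hull ((\<lambda>\<xi>. f \<xi> *\<^sub>R \<xi>) ` \<Omega>)"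

definition deriv_t :: "('a \<Rightarrow> real \<Rightarrow> real) \<Rightarrow> 'a \<Rightarrow> real \<Rightarrow> real" where
  "deriv_t G \<xi> t = deriv (G \<xi>) t"

definition class_C :: "('a::euclidean_space \<Rightarrow> real \<Rightarrow> real) \<Rightarrow> bool" where
  "class_C G \<longleftrightarrow>
     continuous_on (sphere 0 1 \<times> {0<..}) (\<lambda>(\<xi>, t). G \<xi> t) \<and>
     (\<forall>\<xi>\<in>sphere 0 1. \<forall>t>0. G \<xi> differentiable (at t)) \<and>
     continuous_on (sphere 0 1 \<times> {0<..}) (\<lambda>(\<xi>, t). deriv_t G \<xi> t)"

definition class_C_I :: "('a::euclidean_space \<Rightarrow> real \<Rightarrow> real) \<Rightarrow> bool" where
  "class_C_I G \<longleftrightarrow> class_C G \<and> (\<forall>\<xi>\<in>sphere 0 1. \<forall>t>0. deriv_t G \<xi> t > 0)"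

definition class_C_d :: "('a::euclidean_space \<Rightarrow> real \<Rightarrow> real) \<Rightarrow> bool" where
  "class_C_d G \<longleftrightarrow> class_C G \<and> (\<forall>\<xi>\<in>sphere 0 1. \<forall>t>0. deriv_t G \<xi> t < 0)"

end

theory Submission
  imports Defs
begin

definition hmax :: "'a::euclidean_space set \<Rightarrow> ('a \<Rightarrow> real) \<Rightarrow> 'a \<Rightarrow> real" where
  "hmax \<Omega> F v = Sup ((\<lambda>\<zeta>. F \<zeta> * (v \<bullet> \<zeta>)) ` \<Omega>)"

lemma bdd_image_compact:
  fixes h :: "'a::topological_space \<Rightarrow> real"
  assumes "compact S" "continuous_on S h"
  shows "bdd_above (h ` S)"
  using assms by (meson bounded_imp_bdd_above compact_continuous_image compact_imp_bounded)

lemma hmax_bdd: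
  fixes \<Omega> :: "'a::euclidean_space set"
  assumes "compact \<Omega>" "continuous_on \<Omega> F"
  shows "bdd_above ((\<lambda>\<zeta>. F \<zeta> * (v \<bullet> \<zeta>)) ` \<Omega>)"
  by (rule bdd_image_compact[OF assms(1)]) (intro continuous_intros assms(2))

lemma hmax_ge:
  fixes \<Omega> :: "'a::euclidean_space set"
  assumes "compact \<Omega>" "continuous_on \<Omega> F" "\<zeta> \<in> \<Omega>"
  shows "F \<zeta> * (v \<bullet> \<zeta>) \<le> hmax \<Omega> F v"
  unfolding hmax_def by (rule cSup_upper) (use assms hmax_bdd in auto)

lemma hmax_le:
  fixes \<Omega> :: "'a::euclidean_space set"
  assumes "\<Omega> \<noteq> {}" "\<And>\<zeta>. \<zeta> \<in> \<Omega> \<Longrightarrow> F \<zeta> * (v \<bullet> \<zeta>) \<le> c"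
  shows "hmax \<Omega> F v \<le> c"
  unfolding hmax_def by (rule cSup_least) (use assms in auto)

lemma supp_hull:
  fixes P :: "'a::euclidean_space set"
  assumes "compact P" "P \<noteq> {}"
  shows "supp_fun (convex hull P) v = supp_fun P v"
proof -
  have bP: "bdd_above ((\<lambda>y. v \<bullet> y) ` P)"
    by (rule bdd_image_compact[OF assms(1)]) (intro continuous_intros)
  have bH: "bdd_above ((\<lambda>y. v \<bullet> y) ` (convex hull P))"
    by (rule bdd_image_compact) (auto intro!: continuous_intros compact_convex_hull assms(1))
  have sub: "convex hull P \<subseteq> {y. v \<bullet> y \<le> supp_fun P v}"
    by (rule hull_minimal) (auto simp: convex_halfspace_le supp_fun_def intro!: cSup_upper bP)
  show ?thesis
  proof (rule antisym)
    show "supp_fun (convex hull P) v \<le> supp_fun P v"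
      unfolding supp_fun_def[of "convex hull P"] using sub assms(2)
      by (intro cSup_least) auto
    show "supp_fun P v \<le> supp_fun (convex hull P) v"
      unfolding supp_fun_def using assms(2) bH hull_subset[of P convex]
      by (intro cSup_subset_mono) auto
  qed
qed

lemma supp_conv_hull_fun:
  fixes \<Omega> :: "'a::euclidean_space set"
  assumes "compact \<Omega>" "\<Omega> \<noteq> {}" "continuous_on \<Omega> F"
  shows "supp_fun (conv_hull_fun \<Omega> F) v = hmax \<Omega> F v"
proof -
  have "compact ((\<lambda>\<zeta>. F \<zeta> *\<^sub>R \<zeta>) ` \<Omega>)"
    by (rule compact_continuous_image) (intro continuous_intros assms)+
  then have "supp_fun (conv_hull_fun \<Omega> F) v = supp_fun ((\<lambda>\<zeta>. F \<zeta> *\<^sub>R \<zeta>) ` \<Omega>) v"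
    unfolding conv_hull_fun_def using assms(2) by (intro supp_hull) auto
  also have "\<dots> = hmax \<Omega> F v"
    unfolding supp_fun_def hmax_def image_image by simp
  finally show ?thesis .
qed


lemma sphere_ne: "sphere (0::'a::euclidean_space) 1 \<noteq> {}"
proof -
  obtain b :: 'a where "b \<in> Basis" using nonempty_Basis by blast
  then show ?thesis by (metis empty_iff mem_sphere_0 norm_Basis)
qed

lemma frontier_supp:
  fixes K :: "'a::euclidean_space set"
  assumes "closed K" "bdd_above ((\<lambda>y. v \<bullet> y) ` K)" "y \<in> K" "v \<noteq> 0"
    "y \<bullet> v = supp_fun K v"
  shows "y \<in> frontier K"
proof -
  have "y \<notin> interior K"
  proof
    assume "y \<in> interior K"
    then obtain e where e: "e > 0" "ball y e \<subseteq> K" using mem_interior by blast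
    define z where "z = y + (e / 2 / norm v) *\<^sub>R v"
    have "dist y z = e / 2" using assms(4) e(1) by (simp add: z_def dist_norm)
    then have "z \<in> K" using e by auto
    then have "v \<bullet> z \<le> supp_fun K v" unfolding supp_fun_def
      using assms(2) by (intro cSup_upper) auto
    moreover have "v \<bullet> z = v \<bullet> y + e / 2 * norm v"
    proof -
      have vv: "v \<bullet> v = norm v * norm v" by (simp only: dot_square_norm power2_eq_square)
      have "v \<bullet> z = v \<bullet> y + (e / 2 / norm v) * (v \<bullet> v)" by (simp add: z_def inner_add_right)
      also have "\<dots> = v \<bullet> y + e / 2 * norm v" using assms(4) unfolding vv by simp
      finally show ?thesis .
    qed
    moreover have "e / 2 * norm v > 0" using e assms(4) by simp
    ultimately show False using assms(5) by (simp add: inner_commute)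
  qed
  then show ?thesis using assms(1,3) by (simp add: frontier_def)
qed

lemma polar_hull: "polar (convex hull P) = polar P"
proof
  show "polar (convex hull P) \<subseteq> polar P"
    unfolding polar_def using hull_subset[of P convex] by blast
  show "polar P \<subseteq> polar (convex hull P)"
  proof
    fix x assume "x \<in> polar P"
    then have "convex hull P \<subseteq> {y. x \<bullet> y \<le> 1}"
      by (intro hull_minimal) (auto simp: polar_def convex_halfspace_le)
    then show "x \<in> polar (convex hull P)" by (auto simp: polar_def)
  qed
qed

lemma wulff_polar:
  assumes "\<forall>\<zeta>\<in>\<Omega>. f \<zeta> > 0"
  shows "wulff \<Omega> f = polar (conv_hull_fun \<Omega> (\<lambda>x. 1 / f x))"
  unfolding conv_hull_fun_def polar_hull
proof safe
  fix x assume "x \<in> wulff \<Omega> f"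
  then show "x \<in> polar ((\<lambda>\<xi>. (1 / f \<xi>) *\<^sub>R \<xi>) ` \<Omega>)"
    using assms by (auto simp: wulff_def polar_def divide_simps inner_commute)
next
  fix x assume "x \<in> polar ((\<lambda>\<xi>. (1 / f \<xi>) *\<^sub>R \<xi>) ` \<Omega>)"
  then show "x \<in> wulff \<Omega> f"
    using assms by (auto simp: wulff_def polar_def divide_simps inner_commute)
qed

locale setting =
  fixes \<Omega> :: "'a::euclidean_space set" and F :: "'a \<Rightarrow> real"
  assumes sub: "\<Omega> \<subseteq> sphere 0 1" and cpt: "compact \<Omega>"
    and nh: "\<forall>u\<in>sphere 0 1. \<not> \<Omega> \<subseteq> {x. x \<bullet> u \<ge> 0}"
    and Fc: "continuous_on \<Omega> F" and Fp: "\<forall>\<zeta>\<in>\<Omega>. F \<zeta> > 0"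
begin

lemma pos_dir: assumes "w \<noteq> 0" shows "\<exists>\<zeta>\<in>\<Omega>. w \<bullet> \<zeta> > 0"
proof -
  have "- (w /\<^sub>R norm w) \<in> sphere 0 1" using assms by auto
  then obtain \<zeta> where "\<zeta> \<in> \<Omega>" "\<not> \<zeta> \<bullet> (- (w /\<^sub>R norm w)) \<ge> 0" using nh by blast
  then show ?thesis using assms
    by (intro bexI[of _ \<zeta>]) (auto simp: inner_commute divide_simps not_le)
qed

lemma ne: "\<Omega> \<noteq> {}"
proof -
  obtain b :: 'a where "b \<in> Basis" using nonempty_Basis by blast
  then have "b \<noteq> 0" using nonzero_Basis by blast
  then show ?thesis using pos_dir[of b] by blast
qed

lemma hpos: assumes "w \<noteq> 0" shows "hmax \<Omega> F w > 0"
proof -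
  obtain \<zeta> where z: "\<zeta> \<in> \<Omega>" "w \<bullet> \<zeta> > 0" using pos_dir[OF assms] by blast
  have "0 < F \<zeta> * (w \<bullet> \<zeta>)" using z Fp by simp
  also have "\<dots> \<le> hmax \<Omega> F w" by (rule hmax_ge[OF cpt Fc z(1)])
  finally show ?thesis .
qed

lemma Fbound: "\<exists>C>0. \<forall>\<zeta>\<in>\<Omega>. F \<zeta> \<le> C"
proof -
  obtain C where "\<forall>\<zeta>\<in>\<Omega>. F \<zeta> \<le> C"
    using bdd_image_compact[OF cpt Fc] by (auto simp: bdd_above_def)
  then show ?thesis using ne Fp
    by (metis ex_in_conv order_less_le_trans)
qed

lemma hmax_cont: "continuous_on UNIV (hmax \<Omega> F)"
proof -
  obtain C where C: "C > 0" "\<forall>\<zeta>\<in>\<Omega>. F \<zeta> \<le> C" using Fbound by blast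
  have key: "hmax \<Omega> F w \<le> hmax \<Omega> F w' + C * norm (w - w')" for w w'
  proof (rule hmax_le[OF ne])
    fix \<zeta> assume z: "\<zeta> \<in> \<Omega>"
    have n1: "norm \<zeta> = 1" using z sub by auto
    have "(w - w') \<bullet> \<zeta> \<le> norm (w - w')"
      using norm_cauchy_schwarz[of "w - w'" \<zeta>] n1 by simp
    then have "F \<zeta> * ((w - w') \<bullet> \<zeta>) \<le> F \<zeta> * norm (w - w')"
      using Fp z by (intro mult_left_mono) auto
    also have "\<dots> \<le> C * norm (w - w')" using C z by (intro mult_right_mono) auto
    finally have "F \<zeta> * ((w - w') \<bullet> \<zeta>) \<le> C * norm (w - w')" .
    moreover have "F \<zeta> * (w' \<bullet> \<zeta>) \<le> hmax \<Omega> F w'" by (rule hmax_ge[OF cpt Fc z])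
    ultimately show "F \<zeta> * (w \<bullet> \<zeta>) \<le> hmax \<Omega> F w' + C * norm (w - w')"
      by (simp add: inner_diff_left algebra_simps)
  qed
  have "C-lipschitz_on UNIV (hmax \<Omega> F)"
  proof (rule lipschitz_onI)
    fix x y :: 'a
    show "dist (hmax \<Omega> F x) (hmax \<Omega> F y) \<le> C * dist x y"
      using key[of x y] key[of y x] by (simp add: dist_real_def dist_norm norm_minus_commute abs_le_iff)
  qed (use C in simp)
  then show ?thesis by (rule lipschitz_on_continuous_on)
qed

lemma hmin: "\<exists>m>0. \<forall>w\<in>sphere 0 1. m \<le> hmax \<Omega> F w"
proof -
  obtain w0 where w0: "w0 \<in> sphere 0 1" "\<forall>w\<in>sphere 0 1. hmax \<Omega> F w0 \<le> hmax \<Omega> F w"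
    using continuous_attains_inf[OF compact_sphere sphere_ne continuous_on_subset[OF hmax_cont]]
    by blast
  moreover have "hmax \<Omega> F w0 > 0" using w0(1) hpos[of w0] by (metis mem_sphere_0 norm_zero zero_neq_one)
  ultimately show ?thesis by blast
qed

lemma polar_bounded: "\<exists>R>0. polar (conv_hull_fun \<Omega> F) \<subseteq> cball 0 R"
proof -
  obtain m where m: "m > 0" "\<forall>w\<in>sphere 0 1. m \<le> hmax \<Omega> F w" using hmin by blast
  have "norm x \<le> 1 / m" if x: "x \<in> polar (conv_hull_fun \<Omega> F)" for x
  proof (cases "x = 0")
    case False
    define w where "w = x /\<^sub>R norm x"
    have ws: "w \<in> sphere 0 1" using False by (simp add: w_def)
    have "hmax \<Omega> F w \<le> 1 / norm x"
    proof (rule hmax_le[OF ne])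
      fix \<zeta> assume z: "\<zeta> \<in> \<Omega>"
      have "F \<zeta> *\<^sub>R \<zeta> \<in> conv_hull_fun \<Omega> F"
        unfolding conv_hull_fun_def using z by (intro hull_inc) auto
      then have "x \<bullet> (F \<zeta> *\<^sub>R \<zeta>) \<le> 1" using x by (auto simp: polar_def)
      then show "F \<zeta> * (w \<bullet> \<zeta>) \<le> 1 / norm x"
        using False by (simp add: w_def divide_simps mult.commute)
    qed
    then have "m \<le> 1 / norm x" using m ws by force
    then show ?thesis using m False by (simp add: field_simps)
  qed (use m in simp)
  then show ?thesis using m by (intro exI[of _ "1/m"]) auto
qed

lemma attains: "\<exists>u0\<in>\<Omega>. hmax \<Omega> F v = F u0 * (v \<bullet> u0)"
proof -
  have "continuous_on \<Omega> (\<lambda>\<zeta>. F \<zeta> * (v \<bullet> \<zeta>))" by (intro continuous_intros Fc)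
  then obtain u0 where u0: "u0 \<in> \<Omega>" "\<forall>y\<in>\<Omega>. F y * (v \<bullet> y) \<le> F u0 * (v \<bullet> u0)"
    using continuous_attains_sup[OF cpt ne] by blast
  then have "hmax \<Omega> F v = F u0 * (v \<bullet> u0)"
    unfolding hmax_def by (intro cSup_eq_maximum) auto
  then show ?thesis using u0 by blast
qed

lemma K_compact: "compact (conv_hull_fun \<Omega> F)"
  unfolding conv_hull_fun_def
  by (intro compact_convex_hull compact_continuous_image continuous_intros cpt Fc)

lemma K_bdd: "bdd_above ((\<lambda>y. v \<bullet> y) ` conv_hull_fun \<Omega> F)"
  by (rule bdd_image_compact[OF K_compact]) (intro continuous_intros)

lemma K_le: "y \<in> conv_hull_fun \<Omega> F \<Longrightarrow> v \<bullet> y \<le> hmax \<Omega> F v"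
  using supp_conv_hull_fun[OF cpt ne Fc, of v] K_bdd[of v]
  by (metis cSup_upper image_eqI supp_fun_def)

lemma gen_in: "\<zeta> \<in> \<Omega> \<Longrightarrow> F \<zeta> *\<^sub>R \<zeta> \<in> conv_hull_fun \<Omega> F"
  unfolding conv_hull_fun_def by (intro hull_inc) auto

lemma radial_polar:
  assumes "v \<noteq> 0"
  shows "radial_fun (polar (conv_hull_fun \<Omega> F)) v = 1 / hmax \<Omega> F v"
proof -
  let ?H = "hmax \<Omega> F v"
  obtain u0 where u0: "u0 \<in> \<Omega>" "?H = F u0 * (v \<bullet> u0)" using attains by blast
  have Hp: "?H > 0" using hpos[OF assms] .
  have iff: "t *\<^sub>R v \<in> polar (conv_hull_fun \<Omega> F) \<longleftrightarrow> t \<le> 1 / ?H" if t: "t \<ge> 0" for t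
  proof
    assume "t *\<^sub>R v \<in> polar (conv_hull_fun \<Omega> F)"
    then have "t * (v \<bullet> (F u0 *\<^sub>R u0)) \<le> 1" using gen_in[OF u0(1)] by (auto simp: polar_def)
    then have "t * ?H \<le> 1" using u0 by (simp add: mult.commute)
    then show "t \<le> 1 / ?H" using Hp by (simp add: field_simps)
  next
    assume t2: "t \<le> 1 / ?H"
    show "t *\<^sub>R v \<in> polar (conv_hull_fun \<Omega> F)" unfolding polar_def
    proof safe
      fix y assume "y \<in> conv_hull_fun \<Omega> F"
      then have "v \<bullet> y \<le> ?H" by (rule K_le)
      then have "t * (v \<bullet> y) \<le> t * ?H" using t by (intro mult_left_mono) auto
      also have "\<dots> \<le> 1" using t2 Hp by (simp add: field_simps)
      finally show "t *\<^sub>R v \<bullet> y \<le> 1" by simp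
    qed
  qed
  have "{t. t \<ge> 0 \<and> t *\<^sub>R v \<in> polar (conv_hull_fun \<Omega> F)} = {0..1 / ?H}"
    using iff by auto
  then show ?thesis unfolding radial_fun_def using Hp by simp
qed

end

context setting begin

lemma K_ball: "\<exists>C>0. conv_hull_fun \<Omega> F \<subseteq> cball 0 C"
proof -
  obtain C where C: "C > 0" "\<forall>\<zeta>\<in>\<Omega>. F \<zeta> \<le> C" using Fbound by blast
  have "conv_hull_fun \<Omega> F \<subseteq> cball 0 C" unfolding conv_hull_fun_def
  proof (rule hull_minimal)
    show "(\<lambda>\<zeta>. F \<zeta> *\<^sub>R \<zeta>) ` \<Omega> \<subseteq> cball 0 C"
    proof
      fix x assume "x \<in> (\<lambda>\<zeta>. F \<zeta> *\<^sub>R \<zeta>) ` \<Omega>"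
      then obtain \<zeta> where z: "\<zeta> \<in> \<Omega>" "x = F \<zeta> *\<^sub>R \<zeta>" by blast
      have "norm \<zeta> = 1" using z sub by auto
      then show "x \<in> cball 0 C" using z C Fp by auto
    qed
  qed (rule convex_cball)
  then show ?thesis using C by blast
qed

lemma gauss_main:
  assumes v: "v \<in> sphere 0 1 - eta (conv_hull_fun \<Omega> F)"
  shows "\<exists>u0\<in>\<Omega>. hmax \<Omega> F v = F u0 * (v \<bullet> u0) \<and>
           (\<forall>\<zeta>\<in>\<Omega>. \<zeta> \<noteq> u0 \<longrightarrow> F \<zeta> * (v \<bullet> \<zeta>) < hmax \<Omega> F v) \<and>
           radial_gauss1 (polar (conv_hull_fun \<Omega> F)) v = u0"
proof -
  define K where "K = conv_hull_fun \<Omega> F"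
  define H where "H = hmax \<Omega> F v"
  have v0: "v \<noteq> 0" using v by auto
  have Hp: "H > 0" unfolding H_def using hpos[OF v0] .
  obtain u0 where u0: "u0 \<in> \<Omega>" "H = F u0 * (v \<bullet> u0)" using attains unfolding H_def by blast
  have Fu0: "F u0 > 0" using Fp u0 by auto
  have vu0: "v \<bullet> u0 > 0" using Hp Fu0 u0(2) by (metis zero_less_mult_pos)
  have u0s: "norm u0 = 1" using u0 sub by auto
  have supK: "supp_fun K v = H" unfolding K_def H_def by (rule supp_conv_hull_fun[OF cpt ne Fc])
  have clK: "closed K" unfolding K_def using K_compact compact_imp_closed by blast
  have front: "y \<in> frontier K" if "y \<in> K" "v \<bullet> y = H" for y
    using frontier_supp[OF clK K_bdd[of v, folded K_def] that(1) v0] that supK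
    by (simp add: inner_commute)
  have x0K: "F u0 *\<^sub>R u0 \<in> K" unfolding K_def by (rule gen_in[OF u0(1)])
  have x0v: "v \<bullet> (F u0 *\<^sub>R u0) = H" using u0 by simp
  have uniqK: "y = F u0 *\<^sub>R u0" if "y \<in> K" "v \<bullet> y = H" for y
  proof (rule ccontr)
    assume ne0: "y \<noteq> F u0 *\<^sub>R u0"
    have vs: "v \<in> sphere 0 1" using v by blast
    have "\<exists>x y. x \<noteq> y \<and> x \<in> frontier K \<and> x \<bullet> v = supp_fun K v \<and>
        y \<in> frontier K \<and> y \<bullet> v = supp_fun K v"
      apply (rule exI[of _ y], rule exI[of _ "F u0 *\<^sub>R u0"])
      using ne0 front[OF that] front[OF x0K x0v] that x0v supK by (simp add: inner_commute)
    then have "v \<in> eta K" unfolding eta_def using vs by blast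
    then show False using v unfolding K_def by blast
  qed
  have strict: "F \<zeta> * (v \<bullet> \<zeta>) < H" if z: "\<zeta> \<in> \<Omega>" "\<zeta> \<noteq> u0" for \<zeta>
  proof (rule ccontr)
    assume "\<not> F \<zeta> * (v \<bullet> \<zeta>) < H"
    moreover have "F \<zeta> * (v \<bullet> \<zeta>) \<le> H" unfolding H_def by (rule hmax_ge[OF cpt Fc z(1)])
    ultimately have "v \<bullet> (F \<zeta> *\<^sub>R \<zeta>) = H" by simp
    then have eq: "F \<zeta> *\<^sub>R \<zeta> = F u0 *\<^sub>R u0" using uniqK gen_in[OF z(1)] unfolding K_def by blast
    have "norm \<zeta> = 1" using z sub by auto
    then have "\<bar>F \<zeta>\<bar> = \<bar>F u0\<bar>" using arg_cong[OF eq, of norm] u0s by simp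
    moreover have "F \<zeta> > 0" using Fp z by auto
    ultimately have "F \<zeta> = F u0" using Fu0 by simp
    then show False using eq z Fu0 by simp
  qed
  have rad: "radial_fun (polar K) v = 1 / H" unfolding K_def H_def by (rule radial_polar[OF v0])
  have pK: "(1 / H) *\<^sub>R v \<in> polar K"
  proof -
    have "(1 / H) *\<^sub>R v \<bullet> y \<le> 1" if "y \<in> K" for y
    proof -
      have "v \<bullet> y \<le> H" using K_le[of y v] that unfolding K_def H_def by simp
      then show ?thesis using Hp by (simp add: field_simps)
    qed
    then show ?thesis by (auto simp: polar_def)
  qed
  obtain R where R: "R > 0" "polar K \<subseteq> cball 0 R" using polar_bounded unfolding K_def by blast
  have bddP: "bdd_above ((\<lambda>x. u \<bullet> x) ` polar K)" if "norm u = 1" for u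
  proof (rule bdd_aboveI2)
    fix x assume "x \<in> polar K"
    then have "norm x \<le> R" using R by auto
    then show "u \<bullet> x \<le> R" using norm_cauchy_schwarz[of u x] that by simp
  qed
  have u0in: "u0 \<in> radial_gauss (polar K) v"
  proof -
    have "supp_fun (polar K) u0 = 1 / F u0" unfolding supp_fun_def
    proof (rule cSup_eq_maximum)
      show "1 / F u0 \<in> (\<bullet>) u0 ` polar K"
        using pK u0 Fu0 vu0 by (intro image_eqI[of _ _ "(1 / H) *\<^sub>R v"]) (auto simp: inner_commute)
      fix r assume "r \<in> (\<bullet>) u0 ` polar K"
      then obtain x where x: "x \<in> polar K" "r = u0 \<bullet> x" by blast
      then have "x \<bullet> (F u0 *\<^sub>R u0) \<le> 1" using x0K by (auto simp: polar_def)
      then show "r \<le> 1 / F u0" using x Fu0 by (simp add: field_simps inner_commute)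
    qed
    moreover have "u0 \<bullet> (radial_fun (polar K) v *\<^sub>R v) = 1 / F u0"
      using rad u0 Fu0 vu0 by (simp add: inner_commute)
    ultimately show ?thesis unfolding radial_gauss_def using u0s by simp
  qed
  have uniqG: "u = u0" if u: "u \<in> radial_gauss (polar K) v" for u
  proof -
    define s where "s = supp_fun (polar K) u"
    have us: "norm u = 1" using u by (auto simp: radial_gauss_def)
    have us': "u \<bullet> ((1 / H) *\<^sub>R v) = s" using u rad by (simp add: radial_gauss_def s_def)
    have sup_le: "u \<bullet> x \<le> s" if "x \<in> polar K" for x
      unfolding s_def supp_fun_def using bddP[OF us] that by (intro cSup_upper) auto
    obtain C where C: "C > 0" "K \<subseteq> cball 0 C" using K_ball unfolding K_def by blast
    have qK: "(1 / C) *\<^sub>R u \<in> polar K"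
    proof -
      have "(1 / C) *\<^sub>R u \<bullet> y \<le> 1" if "y \<in> K" for y
      proof -
        have "u \<bullet> y \<le> norm y" using norm_cauchy_schwarz[of u y] us by simp
        also have "\<dots> \<le> C" using C that by auto
        finally show ?thesis using C by (simp add: field_simps)
      qed
      then show ?thesis by (auto simp: polar_def)
    qed
    have sp: "s > 0"
    proof -
      have "u \<bullet> ((1 / C) *\<^sub>R u) = 1 / C" using us by (simp add: dot_square_norm)
      then have "1 / C \<le> s" using sup_le[OF qK] by linarith
      moreover have "1 / C > 0" using C by simp
      ultimately show ?thesis by linarith
    qed
    define y where "y = (1 / s) *\<^sub>R u"
    have yK: "y \<in> K"
    proof (rule ccontr)
      assume "y \<notin> K"
      then obtain a b where ab: "a \<bullet> y < b" "\<forall>x\<in>K. a \<bullet> x > b"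
        using separating_hyperplane_closed_point[of K y] clK
        unfolding K_def conv_hull_fun_def by (auto simp: convex_convex_hull)
      have "a \<noteq> 0"
      proof
        assume "a = 0" then show False using ab x0K by auto
      qed
      then obtain \<zeta> where z: "\<zeta> \<in> \<Omega>" "(- a) \<bullet> \<zeta> > 0" using pos_dir[of "- a"] by auto
      have "a \<bullet> (F \<zeta> *\<^sub>R \<zeta>) < 0" using z Fp by (simp add: mult_pos_neg)
      moreover have "F \<zeta> *\<^sub>R \<zeta> \<in> K" unfolding K_def by (rule gen_in[OF z(1)])
      ultimately have bn: "b < 0" using ab by force
      have xK: "(1 / b) *\<^sub>R a \<in> polar K"
      proof -
        have "(1 / b) *\<^sub>R a \<bullet> z \<le> 1" if "z \<in> K" for z
        proof -
          have "b < a \<bullet> z" using ab that by blast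
          then show ?thesis using bn by (simp add: field_simps)
        qed
        then show ?thesis by (auto simp: polar_def)
      qed
      have "(1 / b) *\<^sub>R a \<bullet> y > 1" using ab bn by (simp add: field_simps)
      moreover have "u \<bullet> ((1 / b) *\<^sub>R a) \<le> s" by (rule sup_le[OF xK])
      ultimately have h1: "1 < (a \<bullet> u / b) / s" and h2: "a \<bullet> u / b \<le> s"
        by (simp_all add: y_def inner_commute mult.commute)
      have "(a \<bullet> u / b) / s \<le> 1" using h2 sp by (simp only: divide_le_eq_1_pos)
      then show False using h1 by linarith
    qed
    have "v \<bullet> y = H" using us' sp Hp by (simp add: y_def field_simps inner_commute)
    then have "y = F u0 *\<^sub>R u0" using uniqK yK by blast
    then have "s *\<^sub>R ((1 / s) *\<^sub>R u) = s *\<^sub>R (F u0 *\<^sub>R u0)" by (simp add: y_def)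
    then have ueq: "u = (s * F u0) *\<^sub>R u0" using sp by simp
    then have "\<bar>s * F u0\<bar> = 1" using us u0s by simp
    then have "s * F u0 = 1" using sp Fu0 by simp
    then show "u = u0" using ueq by simp
  qed
  have "radial_gauss1 (polar K) v = u0"
    unfolding radial_gauss1_def using u0in uniqG by blast
  then show ?thesis using u0 strict unfolding K_def H_def by auto
qed

end

lemma quot_to_ln:
  fixes S :: "real \<Rightarrow> real"
  assumes Hp: "H > 0"
    and q: "((\<lambda>\<epsilon>. (S \<epsilon> - H) / \<epsilon>) \<longlongrightarrow> c) (at 0)"
  shows "((\<lambda>\<epsilon>. (ln (S \<epsilon>) - ln H) / \<epsilon>) \<longlongrightarrow> c / H) (at 0)"
proof -
  define \<phi> where "\<phi> = (\<lambda>\<epsilon>. if \<epsilon> = 0 then H else S \<epsilon>)"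
  have ev: "eventually (\<lambda>\<epsilon>. \<epsilon> \<noteq> 0) (at (0::real))" by (simp add: eventually_at_filter)
  have "((\<lambda>y. (\<phi> y - \<phi> 0) / (y - 0)) \<longlongrightarrow> c) (at 0)"
    by (rule Lim_transform_eventually[OF q]) (use ev in \<open>eventually_elim, simp add: \<phi>_def\<close>)
  then have d1: "(\<phi> has_real_derivative c) (at 0)" by (simp add: has_field_derivative_iff)
  have "DERIV ln (\<phi> 0) :> inverse H" using Hp by (simp add: \<phi>_def DERIV_ln)
  from DERIV_chain2[OF this d1]
  have "((\<lambda>x. ln (\<phi> x)) has_real_derivative inverse H * c) (at 0)" .
  then have "((\<lambda>y. (ln (\<phi> y) - ln (\<phi> 0)) / (y - 0)) \<longlongrightarrow> inverse H * c) (at 0)"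
    by (simp add: has_field_derivative_iff)
  then have "((\<lambda>y. (ln (\<phi> y) - ln (\<phi> 0)) / (y - 0)) \<longlongrightarrow> c / H) (at 0)"
    by (simp add: field_simps)
  then show ?thesis
    by (rule Lim_transform_eventually) (use ev in \<open>eventually_elim, simp add: \<phi>_def\<close>)
qed

lemma abs_prod_le1: "\<bar>x\<bar> \<le> a \<Longrightarrow> \<bar>y::real\<bar> \<le> 1 \<Longrightarrow> \<bar>x * y\<bar> \<le> a"
  by (simp add: abs_mult) (metis abs_ge_zero mult_mono mult.right_neutral order_trans)

lemma GD:
  fixes \<Omega> :: "'a::euclidean_space set" and F B :: "'a \<Rightarrow> real"
    and Fe :: "real \<Rightarrow> 'a \<Rightarrow> real"
  assumes cpt: "compact \<Omega>" and sub: "\<Omega> \<subseteq> sphere 0 1" and v: "norm v = 1"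
    and Fc: "continuous_on \<Omega> F" and Bc: "continuous_on \<Omega> B"
    and u0: "u0 \<in> \<Omega>" and Hdef: "hmax \<Omega> F v = F u0 * (v \<bullet> u0)"
    and Hp: "hmax \<Omega> F v > 0"
    and strict: "\<forall>\<zeta>\<in>\<Omega>. \<zeta> \<noteq> u0 \<longrightarrow> F \<zeta> * (v \<bullet> \<zeta>) < hmax \<Omega> F v"
    and unif: "\<forall>\<eta>>0. \<exists>d>0. \<forall>\<epsilon>. \<epsilon> \<noteq> 0 \<and> \<bar>\<epsilon>\<bar> < d \<longrightarrow>
                  (\<forall>\<zeta>\<in>\<Omega>. \<bar>Fe \<epsilon> \<zeta> - F \<zeta> - \<epsilon> * B \<zeta>\<bar> \<le> \<eta> * \<bar>\<epsilon>\<bar>)"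
  shows "((\<lambda>\<epsilon>. (ln (hmax \<Omega> (Fe \<epsilon>) v) - ln (hmax \<Omega> F v)) / \<epsilon>)
           \<longlongrightarrow> B u0 * (v \<bullet> u0) / hmax \<Omega> F v) (at 0)"
proof -
  define H where "H = hmax \<Omega> F v"
  define c where "c = B u0 * (v \<bullet> u0)"
  define G where "G = (\<lambda>\<zeta>. B \<zeta> * (v \<bullet> \<zeta>))"
  have ne: "\<Omega> \<noteq> {}" using u0 by auto
  have ip: "\<bar>v \<bullet> \<zeta>\<bar> \<le> 1" if "\<zeta> \<in> \<Omega>" for \<zeta>
    using Cauchy_Schwarz_ineq2[of v \<zeta>] v that sub by auto
  have FH: "F \<zeta> * (v \<bullet> \<zeta>) \<le> H" if "\<zeta> \<in> \<Omega>" for \<zeta>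
    unfolding H_def by (rule hmax_ge[OF cpt Fc that])
  have Gc: "continuous_on \<Omega> G" unfolding G_def by (intro continuous_intros Bc)
  obtain MB where MB: "\<forall>\<zeta>\<in>\<Omega>. \<bar>B \<zeta>\<bar> \<le> MB"
    using compact_imp_bounded[OF compact_continuous_image[OF Bc cpt]]
    by (auto simp: bounded_real)
  have GMB: "\<bar>G \<zeta>\<bar> \<le> MB" if "\<zeta> \<in> \<Omega>" for \<zeta>
    unfolding G_def using MB that ip[OF that] by (metis abs_prod_le1)
  have q: "((\<lambda>\<epsilon>. (hmax \<Omega> (Fe \<epsilon>) v - H) / \<epsilon>) \<longlongrightarrow> c) (at 0)"
    unfolding LIM_eq
  proof (intro allI impI)
    fix r :: real assume r: "r > 0"
    define \<eta> where "\<eta> = r / 4"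
    have \<eta>: "\<eta> > 0" using r by (simp add: \<eta>_def)
    obtain \<rho> where \<rho>: "\<rho> > 0" "\<forall>\<zeta>\<in>\<Omega>. dist \<zeta> u0 < \<rho> \<longrightarrow> \<bar>G \<zeta> - c\<bar> < \<eta>"
      using Gc u0 \<eta> unfolding continuous_on_iff by (force simp: dist_real_def G_def c_def)
    obtain \<gamma> where \<gamma>: "\<gamma> > 0" "\<forall>\<zeta>\<in>\<Omega>. \<not> dist \<zeta> u0 < \<rho> \<longrightarrow> F \<zeta> * (v \<bullet> \<zeta>) \<le> H - \<gamma>"
    proof (cases "\<Omega> - ball u0 \<rho> = {}")
      case True
      then have "\<forall>\<zeta>\<in>\<Omega>. dist \<zeta> u0 < \<rho>" by (auto simp: dist_commute)
      then show ?thesis using that[of 1] by auto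
    next
      case False
      have "compact (\<Omega> - ball u0 \<rho>)" by (intro compact_diff cpt open_ball)
      moreover have "continuous_on (\<Omega> - ball u0 \<rho>) (\<lambda>\<zeta>. F \<zeta> * (v \<bullet> \<zeta>))"
        by (intro continuous_intros continuous_on_subset[OF Fc]) auto
      ultimately obtain \<zeta>' where z': "\<zeta>' \<in> \<Omega> - ball u0 \<rho>"
        "\<forall>y\<in>\<Omega> - ball u0 \<rho>. F y * (v \<bullet> y) \<le> F \<zeta>' * (v \<bullet> \<zeta>')"
        using continuous_attains_sup[OF _ False] by blast
      have "\<zeta>' \<noteq> u0" using z' \<rho> by auto
      then have lt: "F \<zeta>' * (v \<bullet> \<zeta>') < H" using strict z' unfolding H_def by auto
      show ?thesis
        using that[of "H - F \<zeta>' * (v \<bullet> \<zeta>')"] lt z' by (auto simp: dist_commute)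
    qed
    obtain d where d: "d > 0" "\<forall>\<epsilon>. \<epsilon> \<noteq> 0 \<and> \<bar>\<epsilon>\<bar> < d \<longrightarrow>
                  (\<forall>\<zeta>\<in>\<Omega>. \<bar>Fe \<epsilon> \<zeta> - F \<zeta> - \<epsilon> * B \<zeta>\<bar> \<le> \<eta> * \<bar>\<epsilon>\<bar>)"
      using unif \<eta> by blast
    define s where "s = min d (\<gamma> / (\<bar>c\<bar> + \<bar>MB\<bar> + \<eta> + 1))"
    have sp: "s > 0" using d \<gamma> \<eta> by (simp add: s_def)
    show "\<exists>s>0. \<forall>x. x \<noteq> 0 \<and> norm (x - 0) < s \<longrightarrow>
              norm ((hmax \<Omega> (Fe x) v - H) / x - c) < r"
    proof (intro exI[of _ s] conjI allI impI sp)
      fix \<epsilon> :: real assume "\<epsilon> \<noteq> 0 \<and> norm (\<epsilon> - 0) < s"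
      then have e0: "\<epsilon> \<noteq> 0" and es: "\<bar>\<epsilon>\<bar> < s" by auto
      have ed: "\<bar>\<epsilon>\<bar> < d" using es by (simp add: s_def)
      have eg: "\<bar>\<epsilon>\<bar> * (\<bar>c\<bar> + \<bar>MB\<bar> + \<eta> + 1) < \<gamma>"
        using es \<eta> by (simp add: s_def field_simps)
      have err: "\<bar>Fe \<epsilon> \<zeta> - F \<zeta> - \<epsilon> * B \<zeta>\<bar> \<le> \<eta> * \<bar>\<epsilon>\<bar>" if "\<zeta> \<in> \<Omega>" for \<zeta>
        using d(2) e0 ed that by blast
      have expand: "\<bar>Fe \<epsilon> \<zeta> * (v \<bullet> \<zeta>) - F \<zeta> * (v \<bullet> \<zeta>) - \<epsilon> * G \<zeta>\<bar> \<le> \<eta> * \<bar>\<epsilon>\<bar>"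
        if z: "\<zeta> \<in> \<Omega>" for \<zeta>
      proof -
        have "Fe \<epsilon> \<zeta> * (v \<bullet> \<zeta>) - F \<zeta> * (v \<bullet> \<zeta>) - \<epsilon> * G \<zeta>
              = (Fe \<epsilon> \<zeta> - F \<zeta> - \<epsilon> * B \<zeta>) * (v \<bullet> \<zeta>)"
          by (simp add: G_def algebra_simps)
        then show ?thesis using abs_prod_le1[OF err[OF z] ip[OF z]] by simp
      qed
      have upper: "Fe \<epsilon> \<zeta> * (v \<bullet> \<zeta>) \<le> H + \<epsilon> * c + 2 * \<eta> * \<bar>\<epsilon>\<bar>" if z: "\<zeta> \<in> \<Omega>" for \<zeta>
      proof (cases "dist \<zeta> u0 < \<rho>")
        case True
        have "\<bar>\<epsilon> * G \<zeta> - \<epsilon> * c\<bar> \<le> \<eta> * \<bar>\<epsilon>\<bar>"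
        proof -
          have "\<bar>\<epsilon> * G \<zeta> - \<epsilon> * c\<bar> = \<bar>\<epsilon>\<bar> * \<bar>G \<zeta> - c\<bar>" by (simp add: abs_mult[symmetric] algebra_simps)
          also have "\<dots> \<le> \<bar>\<epsilon>\<bar> * \<eta>" using \<rho>(2) True z by (intro mult_left_mono) auto
          finally show ?thesis by (simp add: mult.commute)
        qed
        then show ?thesis using expand[OF z] FH[OF z] by linarith
      next
        case False
        have "\<bar>\<epsilon> * G \<zeta>\<bar> \<le> \<bar>\<epsilon>\<bar> * \<bar>MB\<bar>"
          unfolding abs_mult using GMB[OF z] by (intro mult_left_mono) auto
        moreover have "\<bar>\<epsilon> * c\<bar> = \<bar>\<epsilon>\<bar> * \<bar>c\<bar>" by (simp add: abs_mult)
        moreover have "\<bar>\<epsilon>\<bar> * \<bar>c\<bar> + \<bar>\<epsilon>\<bar> * \<bar>MB\<bar> + \<eta> * \<bar>\<epsilon>\<bar> < \<gamma>"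
        proof -
          have "\<bar>\<epsilon>\<bar> * (\<bar>c\<bar> + \<bar>MB\<bar> + \<eta> + 1) = \<bar>\<epsilon>\<bar> * \<bar>c\<bar> + \<bar>\<epsilon>\<bar> * \<bar>MB\<bar> + \<eta> * \<bar>\<epsilon>\<bar> + \<bar>\<epsilon>\<bar>"
            by (simp add: algebra_simps)
          then show ?thesis using eg abs_ge_zero[of \<epsilon>] by linarith
        qed
        ultimately show ?thesis using expand[OF z] \<gamma>(2) False z \<eta>
          by (smt (verit, best) abs_ge_zero mult_nonneg_nonneg)
      qed
      have bdd: "bdd_above ((\<lambda>\<zeta>. Fe \<epsilon> \<zeta> * (v \<bullet> \<zeta>)) ` \<Omega>)"
        using upper by (intro bdd_aboveI2) 
      have lower: "H + \<epsilon> * c - \<eta> * \<bar>\<epsilon>\<bar> \<le> hmax \<Omega> (Fe \<epsilon>) v"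
      proof -
        have "H + \<epsilon> * c - \<eta> * \<bar>\<epsilon>\<bar> \<le> Fe \<epsilon> u0 * (v \<bullet> u0)"
          using expand[OF u0] Hdef by (simp add: H_def G_def c_def abs_le_iff)
        also have "\<dots> \<le> hmax \<Omega> (Fe \<epsilon>) v"
          unfolding hmax_def using bdd u0 by (intro cSup_upper) auto
        finally show ?thesis .
      qed
      have up: "hmax \<Omega> (Fe \<epsilon>) v \<le> H + \<epsilon> * c + 2 * \<eta> * \<bar>\<epsilon>\<bar>"
        by (rule hmax_le[OF ne upper])
      have "\<bar>hmax \<Omega> (Fe \<epsilon>) v - H - \<epsilon> * c\<bar> \<le> 2 * \<eta> * \<bar>\<epsilon>\<bar>"
        using lower up \<eta> by (simp add: abs_le_iff) 
      then have "\<bar>(hmax \<Omega> (Fe \<epsilon>) v - H) / \<epsilon> - c\<bar> \<le> 2 * \<eta>"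
      proof -
        assume a: "\<bar>hmax \<Omega> (Fe \<epsilon>) v - H - \<epsilon> * c\<bar> \<le> 2 * \<eta> * \<bar>\<epsilon>\<bar>"
        have "(hmax \<Omega> (Fe \<epsilon>) v - H) / \<epsilon> - c = (hmax \<Omega> (Fe \<epsilon>) v - H - \<epsilon> * c) / \<epsilon>"
          using e0 by (simp add: field_simps)
        then have "\<bar>(hmax \<Omega> (Fe \<epsilon>) v - H) / \<epsilon> - c\<bar> = \<bar>hmax \<Omega> (Fe \<epsilon>) v - H - \<epsilon> * c\<bar> / \<bar>\<epsilon>\<bar>"
          by (simp add: abs_divide)
        also have "\<dots> \<le> 2 * \<eta>" using a e0 by (simp add: divide_le_eq)
        finally show ?thesis .
      qed
      then show "norm ((hmax \<Omega> (Fe \<epsilon>) v - H) / \<epsilon> - c) < r"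
        using r by (simp add: \<eta>_def)
    qed
  qed
  show ?thesis
    using quot_to_ln[OF Hp[folded H_def] q] unfolding H_def c_def .
qed


lemma psi_deriv:
  assumes "class_C \<Psi>" "\<xi> \<in> sphere 0 1" "t > 0"
  shows "(\<Psi> \<xi> has_real_derivative deriv_t \<Psi> \<xi> t) (at t)"
  using assms unfolding class_C_def deriv_t_def
  by (simp add: DERIV_deriv_iff_real_differentiable)

lemma mvt_psi:
  assumes C: "class_C \<Psi>" and xi: "\<xi> \<in> sphere 0 1" and st: "0 < s" "s < t"
  shows "\<exists>z. s < z \<and> z < t \<and> \<Psi> \<xi> t - \<Psi> \<xi> s = (t - s) * deriv_t \<Psi> \<xi> z"
proof -
  have "continuous_on {s..t} (\<Psi> \<xi>)"
    by (intro continuous_at_imp_continuous_on ballI DERIV_isCont[OF psi_deriv[OF C xi]]) (use st in auto)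
  moreover have "\<Psi> \<xi> differentiable (at x)" if "s < x" "x < t" for x
    using C xi that st unfolding class_C_def by auto
  ultimately obtain l z where lz: "s < z" "z < t" "DERIV (\<Psi> \<xi>) z :> l" "\<Psi> \<xi> t - \<Psi> \<xi> s = (t - s) * l"
    using MVT[OF st(2)] by blast
  have "l = deriv_t \<Psi> \<xi> z" using DERIV_unique[OF lz(3) psi_deriv[OF C xi]] lz st by auto
  then show ?thesis using lz by blast
qed

lemma psi_mono:
  assumes C: "class_C_I \<Psi>" and xi: "\<xi> \<in> sphere 0 1" and st: "0 < s" "s < t"
  shows "\<Psi> \<xi> s < \<Psi> \<xi> t"
proof -
  obtain z where "s < z" "z < t" "\<Psi> \<xi> t - \<Psi> \<xi> s = (t - s) * deriv_t \<Psi> \<xi> z"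
    using mvt_psi[OF _ xi st] C unfolding class_C_I_def by blast
  moreover have "deriv_t \<Psi> \<xi> z > 0" using C xi \<open>s < z\<close> st unfolding class_C_I_def by auto
  ultimately show ?thesis using st mult_pos_pos[of "t - s" "deriv_t \<Psi> \<xi> z"] by linarith
qed

lemma deriv_cont_comp:
  assumes C: "class_C \<Psi>" and sub: "\<Omega> \<subseteq> sphere 0 1"
    and fc: "continuous_on \<Omega> f" and fp: "\<forall>\<zeta>\<in>\<Omega>. f \<zeta> > 0"
  shows "continuous_on \<Omega> (\<lambda>\<zeta>. deriv_t \<Psi> \<zeta> (f \<zeta>))"
proof -
  have "continuous_on \<Omega> (\<lambda>\<zeta>. (\<lambda>(\<xi>, t). deriv_t \<Psi> \<xi> t) (\<zeta>, f \<zeta>))"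
    by (rule continuous_on_compose2[of "sphere 0 1 \<times> {0<..}"])
       (use C sub fp in \<open>auto simp: class_C_def intro!: continuous_intros fc\<close>)
  then show ?thesis by simp
qed

lemma analysis_I:
  fixes \<Omega> :: "'a::euclidean_space set"
  assumes C: "class_C_I \<Psi>" and sub: "\<Omega> \<subseteq> sphere 0 1" and cpt: "compact \<Omega>"
    and fc: "continuous_on \<Omega> f" and fp: "\<forall>\<zeta>\<in>\<Omega>. f \<zeta> > 0" and gc: "continuous_on \<Omega> g"
    and fe: "\<exists>\<delta>>0. \<forall>\<epsilon>. \<bar>\<epsilon>\<bar> < \<delta> \<longrightarrow> (\<forall>\<xi>\<in>\<Omega>. fe \<epsilon> \<xi> > 0) \<and>
              (\<forall>\<xi>\<in>\<Omega>. \<Psi> \<xi> (fe \<epsilon> \<xi>) = \<Psi> \<xi> (f \<xi>) + \<epsilon> * g \<xi>)"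
  shows "\<forall>\<eta>>0. \<exists>d>0. \<forall>\<epsilon>. \<epsilon> \<noteq> 0 \<and> \<bar>\<epsilon>\<bar> < d \<longrightarrow>
           (\<forall>\<zeta>\<in>\<Omega>. \<bar>fe \<epsilon> \<zeta> - f \<zeta> - \<epsilon> * (g \<zeta> / deriv_t \<Psi> \<zeta> (f \<zeta>))\<bar> \<le> \<eta> * \<bar>\<epsilon>\<bar>)"
proof (cases "\<Omega> = {}")
  case True then show ?thesis by (auto intro: exI[of _ 1])
next
  case ne: False
  have CC: "class_C \<Psi>" using C by (simp add: class_C_I_def)
  have Dp: "deriv_t \<Psi> \<xi> t > 0" if "\<xi> \<in> sphere 0 1" "t > 0" for \<xi> t
    using C that by (simp add: class_C_I_def)
  obtain \<delta> where \<delta>: "\<delta> > 0" "\<forall>\<epsilon>. \<bar>\<epsilon>\<bar> < \<delta> \<longrightarrow> (\<forall>\<xi>\<in>\<Omega>. fe \<epsilon> \<xi> > 0) \<and>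
              (\<forall>\<xi>\<in>\<Omega>. \<Psi> \<xi> (fe \<epsilon> \<xi>) = \<Psi> \<xi> (f \<xi>) + \<epsilon> * g \<xi>)" using fe by blast
  obtain \<zeta>m where \<zeta>m: "\<zeta>m \<in> \<Omega>" "\<forall>y\<in>\<Omega>. f \<zeta>m \<le> f y"
    using continuous_attains_inf[OF cpt ne fc] by blast
  obtain \<zeta>M where \<zeta>M: "\<zeta>M \<in> \<Omega>" "\<forall>y\<in>\<Omega>. f y \<le> f \<zeta>M"
    using continuous_attains_sup[OF cpt ne fc] by blast
  define m where "m = f \<zeta>m"
  define M where "M = f \<zeta>M"
  have mp: "m > 0" using fp \<zeta>m by (auto simp: m_def)
  have fm: "m \<le> f \<zeta>" "f \<zeta> \<le> M" if "\<zeta> \<in> \<Omega>" for \<zeta> using \<zeta>m \<zeta>M that by (auto simp: m_def M_def)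
  have mM: "m \<le> M" using fm[OF \<zeta>m(1)] by simp
  define T where "T = \<Omega> \<times> {m/2..2*M}"
  have Tc: "compact T" unfolding T_def by (intro compact_Times cpt compact_Icc)
  have Tne: "T \<noteq> {}" unfolding T_def using ne mM mp by auto
  have Tsub: "T \<subseteq> sphere 0 1 \<times> {0<..}" unfolding T_def using sub mp by auto
  have DcT: "continuous_on T (\<lambda>(\<xi>, t). deriv_t \<Psi> \<xi> t)"
    using CC Tsub unfolding class_C_def by (metis continuous_on_subset)
  obtain p0 where p0: "p0 \<in> T" "\<forall>p\<in>T. (\<lambda>(\<xi>, t). deriv_t \<Psi> \<xi> t) p0 \<le> (\<lambda>(\<xi>, t). deriv_t \<Psi> \<xi> t) p"
    using continuous_attains_inf[OF Tc Tne DcT] by blast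
  define c where "c = (\<lambda>(\<xi>, t). deriv_t \<Psi> \<xi> t) p0"
  have cp: "c > 0" using p0(1) Tsub Dp unfolding c_def by (auto split: prod.splits)
  have cle: "c \<le> deriv_t \<Psi> \<xi> t" if "\<xi> \<in> \<Omega>" "m/2 \<le> t" "t \<le> 2*M" for \<xi> t
    using p0(2)[rule_format, of "(\<xi>, t)"] that unfolding c_def T_def by auto
  obtain G where G: "\<forall>\<zeta>\<in>\<Omega>. \<bar>g \<zeta>\<bar> \<le> G"
    using compact_imp_bounded[OF compact_continuous_image[OF gc cpt]]
    by (auto simp: bounded_real)
  define G' where "G' = \<bar>G\<bar> + 1"
  have G'p: "G' > 0" by (simp add: G'_def)
  have gG: "\<bar>g \<zeta>\<bar> < G'" if "\<zeta> \<in> \<Omega>" for \<zeta> using G that by (force simp: G'_def)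
  have close: "\<bar>fe \<epsilon> \<zeta> - f \<zeta>\<bar> \<le> \<bar>\<epsilon>\<bar> * G' / c"
    if e: "\<epsilon> \<noteq> 0" "\<bar>\<epsilon>\<bar> < \<delta>" "\<bar>\<epsilon>\<bar> * G' / c \<le> m / 2" and z: "\<zeta> \<in> \<Omega>" for \<epsilon> \<zeta>
  proof (rule ccontr)
    define d0 where "d0 = \<bar>\<epsilon>\<bar> * G' / c"
    have d0p: "d0 > 0" using e cp G'p by (simp add: d0_def)
    assume "\<not> ?thesis"
    then have big: "\<bar>fe \<epsilon> \<zeta> - f \<zeta>\<bar> > d0" by (simp add: d0_def)
    have zs: "\<zeta> \<in> sphere 0 1" using sub z by auto
    have eq: "\<Psi> \<zeta> (fe \<epsilon> \<zeta>) = \<Psi> \<zeta> (f \<zeta>) + \<epsilon> * g \<zeta>" and fep: "fe \<epsilon> \<zeta> > 0"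
      using \<delta>(2) e z by auto
    have eg: "\<bar>\<epsilon> * g \<zeta>\<bar> \<le> \<bar>\<epsilon>\<bar> * G'"
      unfolding abs_mult using gG[OF z] by (intro mult_left_mono) auto
    have cd0: "c * d0 = \<bar>\<epsilon>\<bar> * G'" using cp by (simp add: d0_def)
    have fz: "m \<le> f \<zeta>" "f \<zeta> \<le> M" using fm z by auto
    have dm: "d0 \<le> m / 2" using e by (simp add: d0_def)
    show False
    proof (cases "fe \<epsilon> \<zeta> > f \<zeta>")
      case True
      define t1 where "t1 = f \<zeta> + d0"
      have t1: "t1 < fe \<epsilon> \<zeta>" using big True by (simp add: t1_def)
      have "\<Psi> \<zeta> t1 < \<Psi> \<zeta> (fe \<epsilon> \<zeta>)" by (rule psi_mono[OF C zs _ t1]) (use fz mp d0p in \<open>simp add: t1_def\<close>)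
      moreover obtain z1 where z1: "f \<zeta> < z1" "z1 < t1" "\<Psi> \<zeta> t1 - \<Psi> \<zeta> (f \<zeta>) = (t1 - f \<zeta>) * deriv_t \<Psi> \<zeta> z1"
        using mvt_psi[OF CC zs, of "f \<zeta>" t1] fz mp d0p by (auto simp: t1_def)
      moreover have "c \<le> deriv_t \<Psi> \<zeta> z1" using cle[OF z, of z1] z1 fz dm mM mp by (simp add: t1_def)
      then have "c * d0 \<le> d0 * deriv_t \<Psi> \<zeta> z1" using d0p by (simp add: mult.commute)
      ultimately show False using eq eg cd0 by (simp add: t1_def; linarith)
    next
      case False
      then have lt: "fe \<epsilon> \<zeta> < f \<zeta> - d0" using big by simp
      define t1 where "t1 = f \<zeta> - d0"
      have t1p: "t1 > 0" using fz dm mp by (simp add: t1_def)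
      have "\<Psi> \<zeta> (fe \<epsilon> \<zeta>) < \<Psi> \<zeta> t1" by (rule psi_mono[OF C zs fep]) (use lt in \<open>simp add: t1_def\<close>)
      moreover obtain z1 where z1: "t1 < z1" "z1 < f \<zeta>" "\<Psi> \<zeta> (f \<zeta>) - \<Psi> \<zeta> t1 = (f \<zeta> - t1) * deriv_t \<Psi> \<zeta> z1"
        using mvt_psi[OF CC zs t1p, of "f \<zeta>"] d0p by (auto simp: t1_def)
      moreover have "c \<le> deriv_t \<Psi> \<zeta> z1" using cle[OF z, of z1] z1 fz dm mM mp by (simp add: t1_def)
      then have "c * d0 \<le> d0 * deriv_t \<Psi> \<zeta> z1" using d0p by (simp add: mult.commute)
      ultimately show False using eq eg cd0 by (simp add: t1_def; linarith)
    qed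
  qed
  show ?thesis
  proof (intro allI impI)
    fix \<eta> :: real assume \<eta>: "\<eta> > 0"
    define \<eta>1 where "\<eta>1 = \<eta> * c * c / G'"
    have \<eta>1: "\<eta>1 > 0" using \<eta> cp G'p by (simp add: \<eta>1_def)
    have uc: "uniformly_continuous_on T (\<lambda>(\<xi>, t). deriv_t \<Psi> \<xi> t)"
      by (rule compact_uniformly_continuous[OF DcT Tc])
    obtain \<sigma> where \<sigma>: "\<sigma> > 0" "\<forall>p\<in>T. \<forall>q\<in>T. dist q p < \<sigma> \<longrightarrow>
        dist ((\<lambda>(\<xi>, t). deriv_t \<Psi> \<xi> t) q) ((\<lambda>(\<xi>, t). deriv_t \<Psi> \<xi> t) p) < \<eta>1"
      using uc \<eta>1 unfolding uniformly_continuous_on_def by metis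
    define d where "d = min \<delta> (min (c * (m / 2) / G') (c * \<sigma> / (2 * G')))"
    have dp: "d > 0" using \<delta> cp mp \<sigma> G'p by (simp add: d_def)
    show "\<exists>d>0. \<forall>\<epsilon>. \<epsilon> \<noteq> 0 \<and> \<bar>\<epsilon>\<bar> < d \<longrightarrow>
           (\<forall>\<zeta>\<in>\<Omega>. \<bar>fe \<epsilon> \<zeta> - f \<zeta> - \<epsilon> * (g \<zeta> / deriv_t \<Psi> \<zeta> (f \<zeta>))\<bar> \<le> \<eta> * \<bar>\<epsilon>\<bar>)"
    proof (intro exI[of _ d] conjI dp allI impI ballI)
      fix \<epsilon> \<zeta> assume e: "\<epsilon> \<noteq> 0 \<and> \<bar>\<epsilon>\<bar> < d" and z: "\<zeta> \<in> \<Omega>"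
      have e\<delta>: "\<bar>\<epsilon>\<bar> < \<delta>" using e by (simp add: d_def)
      have em: "\<bar>\<epsilon>\<bar> * G' / c \<le> m / 2"
      proof -
        have "\<bar>\<epsilon>\<bar> < c * (m / 2) / G'" using e by (simp add: d_def)
        then show ?thesis using cp G'p by (simp add: field_simps)
      qed
      have es: "\<bar>\<epsilon>\<bar> * G' / c < \<sigma>"
      proof -
        have "\<bar>\<epsilon>\<bar> < c * \<sigma> / (2 * G')" using e by (simp add: d_def)
        then have A: "\<bar>\<epsilon>\<bar> * G' * 2 / c < \<sigma>" using cp G'p by (simp add: field_simps)
        moreover have "\<bar>\<epsilon>\<bar> * G' / c \<le> \<bar>\<epsilon>\<bar> * G' * 2 / c" using cp G'p by (simp add: divide_right_mono)
        ultimately show ?thesis by linarith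
      qed
      have cl: "\<bar>fe \<epsilon> \<zeta> - f \<zeta>\<bar> \<le> \<bar>\<epsilon>\<bar> * G' / c" using close e e\<delta> em z by blast
      have zs: "\<zeta> \<in> sphere 0 1" using sub z by auto
      have eq: "\<Psi> \<zeta> (fe \<epsilon> \<zeta>) = \<Psi> \<zeta> (f \<zeta>) + \<epsilon> * g \<zeta>" and fep: "fe \<epsilon> \<zeta> > 0"
        using \<delta>(2) e\<delta> z by auto
      have fz: "m \<le> f \<zeta>" "f \<zeta> \<le> M" using fm z by auto
      obtain z1 where z1: "\<bar>z1 - f \<zeta>\<bar> \<le> \<bar>fe \<epsilon> \<zeta> - f \<zeta>\<bar>"
          "\<epsilon> * g \<zeta> = (fe \<epsilon> \<zeta> - f \<zeta>) * deriv_t \<Psi> \<zeta> z1"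
      proof (cases "fe \<epsilon> \<zeta> = f \<zeta>")
        case True then show ?thesis using that[of "f \<zeta>"] eq by simp
      next
        case False
        show ?thesis
        proof (cases "fe \<epsilon> \<zeta> < f \<zeta>")
          case True
          obtain z where "fe \<epsilon> \<zeta> < z" "z < f \<zeta>" "\<Psi> \<zeta> (f \<zeta>) - \<Psi> \<zeta> (fe \<epsilon> \<zeta>) = (f \<zeta> - fe \<epsilon> \<zeta>) * deriv_t \<Psi> \<zeta> z"
            using mvt_psi[OF CC zs fep True] by blast
          then show ?thesis using that[of z] eq by (simp add: algebra_simps)
        next
          case False
          then have lt: "f \<zeta> < fe \<epsilon> \<zeta>" using \<open>fe \<epsilon> \<zeta> \<noteq> f \<zeta>\<close> by simp
          obtain z where "f \<zeta> < z" "z < fe \<epsilon> \<zeta>" "\<Psi> \<zeta> (fe \<epsilon> \<zeta>) - \<Psi> \<zeta> (f \<zeta>) = (fe \<epsilon> \<zeta> - f \<zeta>) * deriv_t \<Psi> \<zeta> z"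
            using mvt_psi[OF CC zs _ lt] fz mp by auto
          then show ?thesis using that[of z] eq by (simp add: algebra_simps)
        qed
      qed
      have zz: "\<bar>z1 - f \<zeta>\<bar> \<le> m / 2" using z1(1) cl em by linarith
      have z1r: "m / 2 \<le> z1" "z1 \<le> 2 * M" using zz fz mM mp abs_le_D1[of "z1 - f \<zeta>"] abs_le_D2[of "z1 - f \<zeta>"] by linarith+
      have Dz1: "c \<le> deriv_t \<Psi> \<zeta> z1" by (rule cle[OF z z1r])
      have Df: "c \<le> deriv_t \<Psi> \<zeta> (f \<zeta>)" using cle[OF z, of "f \<zeta>"] fz mp mM by simp
      have dist: "\<bar>deriv_t \<Psi> \<zeta> z1 - deriv_t \<Psi> \<zeta> (f \<zeta>)\<bar> < \<eta>1"
      proof -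
        have "(\<zeta>, f \<zeta>) \<in> T" "(\<zeta>, z1) \<in> T" unfolding T_def using z z1r fz mp mM by auto
        moreover have "dist (\<zeta>, z1) (\<zeta>, f \<zeta>) < \<sigma>"
          using z1(1) cl es by (simp add: dist_Pair_Pair dist_real_def)
        ultimately show ?thesis using \<sigma>(2) by (fastforce simp: dist_real_def)
      qed
      define D1 where "D1 = deriv_t \<Psi> \<zeta> z1"
      define D0 where "D0 = deriv_t \<Psi> \<zeta> (f \<zeta>)"
      have D1p: "D1 > 0" and D0p: "D0 > 0" using Dz1 Df cp by (auto simp: D1_def D0_def)
      have "fe \<epsilon> \<zeta> - f \<zeta> = \<epsilon> * g \<zeta> / D1" using z1(2) D1p by (simp add: D1_def field_simps)
      then have "fe \<epsilon> \<zeta> - f \<zeta> - \<epsilon> * (g \<zeta> / D0) = \<epsilon> * g \<zeta> * (D0 - D1) / (D1 * D0)"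
        using D1p D0p by (simp add: field_simps)
      then have "\<bar>fe \<epsilon> \<zeta> - f \<zeta> - \<epsilon> * (g \<zeta> / D0)\<bar> = \<bar>\<epsilon>\<bar> * \<bar>g \<zeta>\<bar> * \<bar>D0 - D1\<bar> / (D1 * D0)"
        using D1p D0p by (simp add: abs_mult abs_divide)
      also have "\<dots> \<le> \<bar>\<epsilon>\<bar> * G' * \<eta>1 / (c * c)"
      proof (rule frac_le)
        show "0 \<le> \<bar>\<epsilon>\<bar> * G' * \<eta>1" using G'p \<eta>1 by simp
        show "\<bar>\<epsilon>\<bar> * \<bar>g \<zeta>\<bar> * \<bar>D0 - D1\<bar> \<le> \<bar>\<epsilon>\<bar> * G' * \<eta>1"
          using gG[OF z] dist \<eta>1 by (intro mult_mono) (auto simp: D0_def D1_def abs_minus_commute intro: mult_left_mono)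
        show "0 < c * c" using cp by simp
        show "c * c \<le> D1 * D0" using Dz1 Df cp by (intro mult_mono) (auto simp: D0_def D1_def)
      qed
      also have "\<dots> = \<eta> * \<bar>\<epsilon>\<bar>" using cp G'p by (simp add: \<eta>1_def field_simps)
      finally show "\<bar>fe \<epsilon> \<zeta> - f \<zeta> - \<epsilon> * (g \<zeta> / deriv_t \<Psi> \<zeta> (f \<zeta>))\<bar> \<le> \<eta> * \<bar>\<epsilon>\<bar>"
        by (simp add: D0_def)
    qed
  qed
qed


lemma analysis:
  fixes \<Omega> :: "'a::euclidean_space set"
  assumes C: "class_C_I \<Psi> \<or> class_C_d \<Psi>" and sub: "\<Omega> \<subseteq> sphere 0 1" and cpt: "compact \<Omega>"
    and fc: "continuous_on \<Omega> f" and fp: "\<forall>\<zeta>\<in>\<Omega>. f \<zeta> > 0" and gc: "continuous_on \<Omega> g"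
    and fe: "\<exists>\<delta>>0. \<forall>\<epsilon>. \<bar>\<epsilon>\<bar> < \<delta> \<longrightarrow> (\<forall>\<xi>\<in>\<Omega>. fe \<epsilon> \<xi> > 0) \<and>
              (\<forall>\<xi>\<in>\<Omega>. \<Psi> \<xi> (fe \<epsilon> \<xi>) = \<Psi> \<xi> (f \<xi>) + \<epsilon> * g \<xi>)"
  shows "\<forall>\<eta>>0. \<exists>d>0. \<forall>\<epsilon>. \<epsilon> \<noteq> 0 \<and> \<bar>\<epsilon>\<bar> < d \<longrightarrow>
           (\<forall>\<zeta>\<in>\<Omega>. \<bar>fe \<epsilon> \<zeta> - f \<zeta> - \<epsilon> * (g \<zeta> / deriv_t \<Psi> \<zeta> (f \<zeta>))\<bar> \<le> \<eta> * \<bar>\<epsilon>\<bar>)"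
  using C
proof
  assume "class_C_I \<Psi>"
  then show ?thesis using analysis_I[OF _ sub cpt fc fp gc fe] by blast
next
  assume Cd: "class_C_d \<Psi>"
  define \<Psi>' where "\<Psi>' = (\<lambda>\<xi> t. - \<Psi> \<xi> t)"
  have CC: "class_C \<Psi>" using Cd by (simp add: class_C_d_def)
  have dd: "deriv_t \<Psi>' \<xi> t = - deriv_t \<Psi> \<xi> t" if "\<xi> \<in> sphere 0 1" "t > 0" for \<xi> t
    unfolding \<Psi>'_def deriv_t_def
    by (rule DERIV_imp_deriv, rule DERIV_minus, rule psi_deriv[OF CC that, unfolded deriv_t_def])
  have C1: "class_C_I \<Psi>'"
    unfolding class_C_I_def class_C_def
  proof (intro conjI ballI allI impI)
    have "continuous_on (sphere 0 1 \<times> {0<..}) (\<lambda>p. - (\<lambda>(\<xi>, t). \<Psi> \<xi> t) p)"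
      using CC unfolding class_C_def by (intro continuous_on_minus) auto
    then show "continuous_on (sphere 0 1 \<times> {0<..}) (\<lambda>(\<xi>, t). \<Psi>' \<xi> t)"
      by (simp add: \<Psi>'_def case_prod_unfold)
    fix \<xi> :: 'a and t :: real assume "\<xi> \<in> sphere 0 1" "0 < t"
    then show "\<Psi>' \<xi> differentiable at t"
      using CC unfolding class_C_def \<Psi>'_def by (auto intro: differentiable_minus)
  next
    have "continuous_on (sphere 0 1 \<times> {0<..}) (\<lambda>p. - (\<lambda>(\<xi>, t). deriv_t \<Psi> \<xi> t) p)"
      using CC unfolding class_C_def by (intro continuous_on_minus) auto
    then show "continuous_on (sphere 0 1 \<times> {0<..}) (\<lambda>(\<xi>, t). deriv_t \<Psi>' \<xi> t)"
      by (rule continuous_on_eq) (auto simp: dd)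
  next
    fix \<xi> :: 'a and t :: real assume "\<xi> \<in> sphere 0 1" "0 < t"
    then show "0 < deriv_t \<Psi>' \<xi> t" using Cd dd by (auto simp: class_C_d_def)
  qed
  have fe': "\<exists>\<delta>>0. \<forall>\<epsilon>. \<bar>\<epsilon>\<bar> < \<delta> \<longrightarrow> (\<forall>\<xi>\<in>\<Omega>. fe \<epsilon> \<xi> > 0) \<and>
              (\<forall>\<xi>\<in>\<Omega>. \<Psi>' \<xi> (fe \<epsilon> \<xi>) = \<Psi>' \<xi> (f \<xi>) + \<epsilon> * (- g \<xi>))"
  proof -
    obtain \<delta> where \<delta>: "\<delta> > 0" "\<forall>\<epsilon>. \<bar>\<epsilon>\<bar> < \<delta> \<longrightarrow> (\<forall>\<xi>\<in>\<Omega>. fe \<epsilon> \<xi> > 0) \<and>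
              (\<forall>\<xi>\<in>\<Omega>. \<Psi> \<xi> (fe \<epsilon> \<xi>) = \<Psi> \<xi> (f \<xi>) + \<epsilon> * g \<xi>)" using fe by blast
    show ?thesis by (rule exI[of _ \<delta>]) (use \<delta> in \<open>auto simp: \<Psi>'_def\<close>)
  qed
  have gc': "continuous_on \<Omega> (\<lambda>\<xi>. - g \<xi>)" by (intro continuous_intros gc)
  have eqb: "- g \<zeta> / deriv_t \<Psi>' \<zeta> (f \<zeta>) = g \<zeta> / deriv_t \<Psi> \<zeta> (f \<zeta>)" if "\<zeta> \<in> \<Omega>" for \<zeta>
    using dd[of \<zeta> "f \<zeta>"] that sub fp by auto
  note A = analysis_I[OF C1 sub cpt fc fp gc' fe']
  show ?thesis
  proof (intro allI impI)
    fix \<eta> :: real assume "\<eta> > 0"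
    then obtain d where d: "d > 0" "\<forall>\<epsilon>. \<epsilon> \<noteq> 0 \<and> \<bar>\<epsilon>\<bar> < d \<longrightarrow>
           (\<forall>\<zeta>\<in>\<Omega>. \<bar>fe \<epsilon> \<zeta> - f \<zeta> - \<epsilon> * (- g \<zeta> / deriv_t \<Psi>' \<zeta> (f \<zeta>))\<bar> \<le> \<eta> * \<bar>\<epsilon>\<bar>)"
      using A by blast
    show "\<exists>d>0. \<forall>\<epsilon>. \<epsilon> \<noteq> 0 \<and> \<bar>\<epsilon>\<bar> < d \<longrightarrow>
           (\<forall>\<zeta>\<in>\<Omega>. \<bar>fe \<epsilon> \<zeta> - f \<zeta> - \<epsilon> * (g \<zeta> / deriv_t \<Psi> \<zeta> (f \<zeta>))\<bar> \<le> \<eta> * \<bar>\<epsilon>\<bar>)"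
    proof (intro exI[of _ d] conjI allI impI ballI d(1))
      fix \<epsilon> \<zeta> assume e: "\<epsilon> \<noteq> 0 \<and> \<bar>\<epsilon>\<bar> < d" and z: "\<zeta> \<in> \<Omega>"
      have "\<bar>fe \<epsilon> \<zeta> - f \<zeta> - \<epsilon> * (- g \<zeta> / deriv_t \<Psi>' \<zeta> (f \<zeta>))\<bar> \<le> \<eta> * \<bar>\<epsilon>\<bar>"
        using d(2) e z by blast
      then show "\<bar>fe \<epsilon> \<zeta> - f \<zeta> - \<epsilon> * (g \<zeta> / deriv_t \<Psi> \<zeta> (f \<zeta>))\<bar> \<le> \<eta> * \<bar>\<epsilon>\<bar>"
        unfolding eqb[OF z] .
    qed
  qed
qed

lemma rec_point:
  fixes m a x \<epsilon> \<beta> \<eta> \<eta>' K :: real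
  assumes mp: "m > 0" and am: "m \<le> a" and e: "\<bar>x - a - \<epsilon> * \<beta>\<bar> \<le> \<eta>' * \<bar>\<epsilon>\<bar>"
    and \<beta>: "\<bar>\<beta>\<bar> \<le> K" and xa: "\<bar>x - a\<bar> \<le> \<bar>\<epsilon>\<bar> * K" and xm: "\<bar>x - a\<bar> \<le> m / 2"
    and \<eta>': "4 * \<eta>' \<le> \<eta> * m^2" and eK: "\<bar>\<epsilon>\<bar> * (4 * K^2) \<le> \<eta> * m^3" and \<eta>'p: "\<eta>' \<ge> 0"
  shows "\<bar>1 / x - 1 / a - \<epsilon> * (- \<beta> / a^2)\<bar> \<le> \<eta> * \<bar>\<epsilon>\<bar>"
proof -
  have ap: "a > 0" using mp am by simp
  have xm2: "x \<ge> m / 2" using xm am abs_le_D2[of "x - a"] by linarith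
  have xp: "x > 0" using xm2 mp by simp
  have K0: "K \<ge> 0" using \<beta> by simp
  have id: "1 / x - 1 / a - \<epsilon> * (- \<beta> / a^2)
      = \<epsilon> * \<beta> * (x - a) / (a^2 * x) - (x - a - \<epsilon> * \<beta>) / (a * x)"
    using ap xp by (simp add: field_simps power2_eq_square)
  have den1: "m^2 * (m / 2) \<le> a^2 * x"
    using am xm2 mp by (intro mult_mono power_mono) auto
  have num1: "\<bar>\<epsilon> * \<beta> * (x - a)\<bar> \<le> \<bar>\<epsilon>\<bar> * K * (\<bar>\<epsilon>\<bar> * K)"
    unfolding abs_mult using \<beta> xa K0 by (intro mult_mono) auto
  have t1: "\<bar>\<epsilon> * \<beta> * (x - a) / (a^2 * x)\<bar> \<le> \<bar>\<epsilon>\<bar> * K * (\<bar>\<epsilon>\<bar> * K) / (m^2 * (m / 2))"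
    unfolding abs_divide using num1 den1 ap xp mp K0
    by (intro frac_le) (auto simp: abs_mult)
  have t1': "\<bar>\<epsilon>\<bar> * K * (\<bar>\<epsilon>\<bar> * K) / (m^2 * (m / 2)) \<le> \<eta> * \<bar>\<epsilon>\<bar> / 2"
  proof -
    have "\<bar>\<epsilon>\<bar> * (\<bar>\<epsilon>\<bar> * (4 * K^2)) \<le> \<bar>\<epsilon>\<bar> * (\<eta> * m^3)"
      using eK by (intro mult_left_mono) auto
    then show ?thesis using mp by (simp add: field_simps power2_eq_square power3_eq_cube)
  qed
  have den2: "m * (m / 2) \<le> a * x" using am xm2 mp by (intro mult_mono) auto
  have t2: "\<bar>(x - a - \<epsilon> * \<beta>) / (a * x)\<bar> \<le> \<eta>' * \<bar>\<epsilon>\<bar> / (m * (m / 2))"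
    unfolding abs_divide using e den2 ap xp mp \<eta>'p
    by (intro frac_le) (auto simp: abs_mult)
  have t2': "\<eta>' * \<bar>\<epsilon>\<bar> / (m * (m / 2)) \<le> \<eta> * \<bar>\<epsilon>\<bar> / 2"
  proof -
    have "\<bar>\<epsilon>\<bar> * (4 * \<eta>') \<le> \<bar>\<epsilon>\<bar> * (\<eta> * m^2)" using \<eta>' by (intro mult_left_mono) auto
    then show ?thesis using mp by (simp add: field_simps power2_eq_square)
  qed
  show ?thesis unfolding id
    using t1 t1' t2 t2' abs_triangle_ineq4[of "\<epsilon> * \<beta> * (x - a) / (a^2 * x)" "(x - a - \<epsilon> * \<beta>) / (a * x)"]
    by linarith
qed


lemma REC:
  fixes \<Omega> :: "'a set" and F0 B0 :: "'a \<Rightarrow> real" and Fe :: "real \<Rightarrow> 'a \<Rightarrow> real"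
  assumes mp: "m > 0" and Fm: "\<forall>\<zeta>\<in>\<Omega>. m \<le> F0 \<zeta>" and Bb: "\<forall>\<zeta>\<in>\<Omega>. \<bar>B0 \<zeta>\<bar> \<le> Mb"
    and unif: "\<forall>\<eta>>0. \<exists>d>0. \<forall>\<epsilon>. \<epsilon> \<noteq> 0 \<and> \<bar>\<epsilon>\<bar> < d \<longrightarrow>
                  (\<forall>\<zeta>\<in>\<Omega>. \<bar>Fe \<epsilon> \<zeta> - F0 \<zeta> - \<epsilon> * B0 \<zeta>\<bar> \<le> \<eta> * \<bar>\<epsilon>\<bar>)"
  shows "\<forall>\<eta>>0. \<exists>d>0. \<forall>\<epsilon>. \<epsilon> \<noteq> 0 \<and> \<bar>\<epsilon>\<bar> < d \<longrightarrow>
                  (\<forall>\<zeta>\<in>\<Omega>. \<bar>1 / Fe \<epsilon> \<zeta> - 1 / F0 \<zeta> - \<epsilon> * (- B0 \<zeta> / (F0 \<zeta>)^2)\<bar> \<le> \<eta> * \<bar>\<epsilon>\<bar>)"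
proof (intro allI impI)
  fix \<eta> :: real assume \<eta>: "\<eta> > 0"
  define K where "K = \<bar>Mb\<bar> + 1"
  have Kp: "K > 0" by (simp add: K_def)
  define \<eta>' where "\<eta>' = min 1 (\<eta> * m^2 / 4)"
  have \<eta>'p: "\<eta>' > 0" using \<eta> mp by (simp add: \<eta>'_def)
  obtain d1 where d1: "d1 > 0" "\<forall>\<epsilon>. \<epsilon> \<noteq> 0 \<and> \<bar>\<epsilon>\<bar> < d1 \<longrightarrow>
                  (\<forall>\<zeta>\<in>\<Omega>. \<bar>Fe \<epsilon> \<zeta> - F0 \<zeta> - \<epsilon> * B0 \<zeta>\<bar> \<le> \<eta>' * \<bar>\<epsilon>\<bar>)"
    using unif \<eta>'p by blast
  define d where "d = min d1 (min (m / (2 * K)) (\<eta> * m^3 / (4 * K^2)))"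
  have dp: "d > 0" using d1 mp Kp \<eta> by (simp add: d_def)
  show "\<exists>d>0. \<forall>\<epsilon>. \<epsilon> \<noteq> 0 \<and> \<bar>\<epsilon>\<bar> < d \<longrightarrow>
                  (\<forall>\<zeta>\<in>\<Omega>. \<bar>1 / Fe \<epsilon> \<zeta> - 1 / F0 \<zeta> - \<epsilon> * (- B0 \<zeta> / (F0 \<zeta>)^2)\<bar> \<le> \<eta> * \<bar>\<epsilon>\<bar>)"
  proof (intro exI[of _ d] conjI dp allI impI ballI)
    fix \<epsilon> \<zeta> assume e: "\<epsilon> \<noteq> 0 \<and> \<bar>\<epsilon>\<bar> < d" and z: "\<zeta> \<in> \<Omega>"
    have err: "\<bar>Fe \<epsilon> \<zeta> - F0 \<zeta> - \<epsilon> * B0 \<zeta>\<bar> \<le> \<eta>' * \<bar>\<epsilon>\<bar>"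
      using d1(2) e z by (simp add: d_def)
    have \<beta>: "\<bar>B0 \<zeta>\<bar> \<le> K" using Bb z by (force simp: K_def)
    have \<beta>1: "\<bar>B0 \<zeta>\<bar> \<le> K - 1" using Bb z by (force simp: K_def)
    have "\<bar>\<epsilon> * B0 \<zeta>\<bar> \<le> \<bar>\<epsilon>\<bar> * (K - 1)" unfolding abs_mult using \<beta>1 by (intro mult_left_mono) auto
    moreover have "\<eta>' * \<bar>\<epsilon>\<bar> \<le> \<bar>\<epsilon>\<bar>" using \<eta>'p by (simp add: \<eta>'_def mult_left_le_one_le)
    ultimately have xa: "\<bar>Fe \<epsilon> \<zeta> - F0 \<zeta>\<bar> \<le> \<bar>\<epsilon>\<bar> * K"
      using err by (simp add: algebra_simps abs_le_iff) linarith
    have "\<bar>\<epsilon>\<bar> < m / (2 * K)" using e by (simp add: d_def)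
    then have "\<bar>\<epsilon>\<bar> * K \<le> m / 2" using Kp by (simp add: field_simps)
    then have xm: "\<bar>Fe \<epsilon> \<zeta> - F0 \<zeta>\<bar> \<le> m / 2" using xa by linarith
    have "\<bar>\<epsilon>\<bar> < \<eta> * m^3 / (4 * K^2)" using e by (simp add: d_def)
    then have eK: "\<bar>\<epsilon>\<bar> * (4 * K^2) \<le> \<eta> * m^3" using Kp by (simp add: field_simps)
    have \<eta>'4: "4 * \<eta>' \<le> \<eta> * m^2" by (simp add: \<eta>'_def)
    show "\<bar>1 / Fe \<epsilon> \<zeta> - 1 / F0 \<zeta> - \<epsilon> * (- B0 \<zeta> / (F0 \<zeta>)^2)\<bar> \<le> \<eta> * \<bar>\<epsilon>\<bar>"
      by (rule rec_point[OF mp _ err \<beta> xa xm \<eta>'4 eK]) (use Fm z \<eta>'p in auto)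
  qed
qed


theorem lemma3p3:
  fixes \<Omega> :: "'a::euclidean_space set"
    and \<Psi> :: "'a \<Rightarrow> real \<Rightarrow> real"
    and f g :: "'a \<Rightarrow> real"
    and fe :: "real \<Rightarrow> 'a \<Rightarrow> real"
  assumes dim: "DIM('a) \<ge> 2"
    and \<Omega>_sub: "\<Omega> \<subseteq> sphere 0 1"
    and \<Omega>_closed: "closed \<Omega>"
    and \<Omega>_not_hemi: "\<forall>u\<in>sphere 0 1. \<not> \<Omega> \<subseteq> {x. x \<bullet> u \<ge> 0}"
    and \<Psi>_class: "class_C_I \<Psi> \<or> class_C_d \<Psi>"
    and f_cont: "continuous_on \<Omega> f" and f_pos: "\<forall>\<xi>\<in>\<Omega>. f \<xi> > 0"
    and g_cont: "continuous_on \<Omega> g"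
    and fe_def: "\<exists>\<delta>>0. \<forall>\<epsilon>. \<bar>\<epsilon>\<bar> < \<delta> \<longrightarrow>
         continuous_on \<Omega> (fe \<epsilon>) \<and> (\<forall>\<xi>\<in>\<Omega>. fe \<epsilon> \<xi> > 0) \<and>
         (\<forall>\<xi>\<in>\<Omega>. \<Psi> \<xi> (fe \<epsilon> \<xi>) = \<Psi> \<xi> (f \<xi>) + \<epsilon> * g \<xi>)"
  shows "(\<forall>v\<in>sphere 0 1 - eta (conv_hull_fun \<Omega> f).
            let u0 = radial_gauss1 (polar (conv_hull_fun \<Omega> f)) v in
            ((\<lambda>\<epsilon>. (ln (supp_fun (conv_hull_fun \<Omega> (fe \<epsilon>)) v)
                    - ln (supp_fun (conv_hull_fun \<Omega> f) v)) / \<epsilon>)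
              \<longlongrightarrow> g u0 / (f u0 * deriv_t \<Psi> u0 (f u0))) (at 0))
       \<and> (\<forall>\<xi>\<in>sphere 0 1 - eta (conv_hull_fun \<Omega> (\<lambda>x. 1 / f x)).
            let u1 = radial_gauss1 (wulff \<Omega> f) \<xi> in
            ((\<lambda>\<epsilon>. (ln (radial_fun (wulff \<Omega> (fe \<epsilon>)) \<xi>)
                    - ln (radial_fun (wulff \<Omega> f) \<xi>)) / \<epsilon>)
              \<longlongrightarrow> g u1 / (f u1 * deriv_t \<Psi> u1 (f u1))) (at 0))"
proof -
  have cpt: "compact \<Omega>"
    using \<Omega>_closed bounded_subset[OF bounded_sphere \<Omega>_sub] by (simp add: compact_eq_bounded_closed)
  obtain \<delta> where \<delta>: "\<delta> > 0" "\<forall>\<epsilon>. \<bar>\<epsilon>\<bar> < \<delta> \<longrightarrow>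
         continuous_on \<Omega> (fe \<epsilon>) \<and> (\<forall>\<xi>\<in>\<Omega>. fe \<epsilon> \<xi> > 0) \<and>
         (\<forall>\<xi>\<in>\<Omega>. \<Psi> \<xi> (fe \<epsilon> \<xi>) = \<Psi> \<xi> (f \<xi>) + \<epsilon> * g \<xi>)" using fe_def by blast
  have fe2: "\<exists>\<delta>>0. \<forall>\<epsilon>. \<bar>\<epsilon>\<bar> < \<delta> \<longrightarrow> (\<forall>\<xi>\<in>\<Omega>. fe \<epsilon> \<xi> > 0) \<and>
              (\<forall>\<xi>\<in>\<Omega>. \<Psi> \<xi> (fe \<epsilon> \<xi>) = \<Psi> \<xi> (f \<xi>) + \<epsilon> * g \<xi>)" using \<delta> by blast
  define b where "b = (\<lambda>\<zeta>. g \<zeta> / deriv_t \<Psi> \<zeta> (f \<zeta>))"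
  have U: "\<forall>\<eta>>0. \<exists>d>0. \<forall>\<epsilon>. \<epsilon> \<noteq> 0 \<and> \<bar>\<epsilon>\<bar> < d \<longrightarrow>
           (\<forall>\<zeta>\<in>\<Omega>. \<bar>fe \<epsilon> \<zeta> - f \<zeta> - \<epsilon> * b \<zeta>\<bar> \<le> \<eta> * \<bar>\<epsilon>\<bar>)"
    using analysis[OF \<Psi>_class \<Omega>_sub cpt f_cont f_pos g_cont fe2] unfolding b_def .
  have CC: "class_C \<Psi>" using \<Psi>_class by (auto simp: class_C_I_def class_C_d_def)
  have Dne: "deriv_t \<Psi> \<zeta> (f \<zeta>) \<noteq> 0" if "\<zeta> \<in> \<Omega>" for \<zeta>
  proof -
    have "\<zeta> \<in> sphere 0 1" "f \<zeta> > 0" using that \<Omega>_sub f_pos by auto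
    then show ?thesis using \<Psi>_class by (force simp: class_C_I_def class_C_d_def)
  qed
  have bc: "continuous_on \<Omega> b" unfolding b_def
    by (intro continuous_on_divide g_cont deriv_cont_comp[OF CC \<Omega>_sub f_cont f_pos]) (use Dne in auto)
  have ev: "eventually (\<lambda>\<epsilon>. \<bar>\<epsilon>\<bar> < \<delta>) (at (0::real))"
    using \<delta>(1) by (auto simp: eventually_at dist_real_def intro!: exI[of _ \<delta>])
  interpret S1: setting \<Omega> f by unfold_locales (use \<Omega>_sub cpt \<Omega>_not_hemi f_cont f_pos in auto)
  have fi: "continuous_on \<Omega> (\<lambda>x. 1 / f x)" using f_cont f_pos by (intro continuous_intros) auto
  interpret S2: setting \<Omega> "\<lambda>x. 1 / f x" by unfold_locales (use \<Omega>_sub cpt \<Omega>_not_hemi fi f_pos in auto)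
  have setE: "setting \<Omega> (\<lambda>x. 1 / fe \<epsilon> x)" if "\<bar>\<epsilon>\<bar> < \<delta>" for \<epsilon>
  proof -
    have "continuous_on \<Omega> (fe \<epsilon>)" "\<forall>\<xi>\<in>\<Omega>. fe \<epsilon> \<xi> > 0" using \<delta> that by auto
    then have "continuous_on \<Omega> (\<lambda>x. 1 / fe \<epsilon> x)" by (intro continuous_intros) auto
    then show ?thesis using \<open>\<forall>\<xi>\<in>\<Omega>. fe \<epsilon> \<xi> > 0\<close>
      by unfold_locales (use \<Omega>_sub cpt \<Omega>_not_hemi in auto)
  qed
  show ?thesis
  proof (intro conjI ballI)
    fix v assume v: "v \<in> sphere 0 1 - eta (conv_hull_fun \<Omega> f)"
    obtain u0 where u0: "u0 \<in> \<Omega>" "hmax \<Omega> f v = f u0 * (v \<bullet> u0)"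
        "\<forall>\<zeta>\<in>\<Omega>. \<zeta> \<noteq> u0 \<longrightarrow> f \<zeta> * (v \<bullet> \<zeta>) < hmax \<Omega> f v"
        "radial_gauss1 (polar (conv_hull_fun \<Omega> f)) v = u0"
      using S1.gauss_main[OF v] by blast
    have nv: "norm v = 1" using v by auto
    have Hp: "hmax \<Omega> f v > 0" using S1.hpos[of v] nv by (metis norm_zero zero_neq_one)
    have lim: "((\<lambda>\<epsilon>. (ln (hmax \<Omega> (fe \<epsilon>) v) - ln (hmax \<Omega> f v)) / \<epsilon>)
           \<longlongrightarrow> b u0 * (v \<bullet> u0) / hmax \<Omega> f v) (at 0)"
      by (rule GD[OF cpt \<Omega>_sub nv f_cont bc u0(1,2) Hp u0(3) U])
    have fu0: "f u0 > 0" using f_pos u0 by auto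
    have vu0: "v \<bullet> u0 \<noteq> 0" using Hp u0(2) by auto
    have val: "b u0 * (v \<bullet> u0) / hmax \<Omega> f v = g u0 / (f u0 * deriv_t \<Psi> u0 (f u0))"
      using u0(2) fu0 vu0 Dne[OF u0(1)] by (simp add: b_def field_simps)
    have "((\<lambda>\<epsilon>. (ln (supp_fun (conv_hull_fun \<Omega> (fe \<epsilon>)) v)
                    - ln (supp_fun (conv_hull_fun \<Omega> f) v)) / \<epsilon>)
              \<longlongrightarrow> g u0 / (f u0 * deriv_t \<Psi> u0 (f u0))) (at 0)"
    proof (rule Lim_transform_eventually[OF lim[unfolded val]])
      show "\<forall>\<^sub>F x in at 0. (ln (hmax \<Omega> (fe x) v) - ln (hmax \<Omega> f v)) / x =
          (ln (supp_fun (conv_hull_fun \<Omega> (fe x)) v) - ln (supp_fun (conv_hull_fun \<Omega> f) v)) / x"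
        using ev
      proof eventually_elim
        case (elim \<epsilon>)
        then have "continuous_on \<Omega> (fe \<epsilon>)" using \<delta> by auto
        then show ?case using supp_conv_hull_fun[OF cpt S1.ne] f_cont by simp
      qed
    qed
    then show "let u0 = radial_gauss1 (polar (conv_hull_fun \<Omega> f)) v in
            ((\<lambda>\<epsilon>. (ln (supp_fun (conv_hull_fun \<Omega> (fe \<epsilon>)) v)
                    - ln (supp_fun (conv_hull_fun \<Omega> f) v)) / \<epsilon>)
              \<longlongrightarrow> g u0 / (f u0 * deriv_t \<Psi> u0 (f u0))) (at 0)"
      unfolding Let_def u0(4) .
  next
    fix \<xi> assume xi: "\<xi> \<in> sphere 0 1 - eta (conv_hull_fun \<Omega> (\<lambda>x. 1 / f x))"
    obtain u1 where u1: "u1 \<in> \<Omega>" "hmax \<Omega> (\<lambda>x. 1 / f x) \<xi> = 1 / f u1 * (\<xi> \<bullet> u1)"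
        "\<forall>\<zeta>\<in>\<Omega>. \<zeta> \<noteq> u1 \<longrightarrow> 1 / f \<zeta> * (\<xi> \<bullet> \<zeta>) < hmax \<Omega> (\<lambda>x. 1 / f x) \<xi>"
        "radial_gauss1 (polar (conv_hull_fun \<Omega> (\<lambda>x. 1 / f x))) \<xi> = u1"
      using S2.gauss_main[OF xi] by blast
    have nxi: "norm \<xi> = 1" using xi by auto
    have xi0: "\<xi> \<noteq> 0" using nxi by (metis norm_zero zero_neq_one)
    have Hp: "hmax \<Omega> (\<lambda>x. 1 / f x) \<xi> > 0" using S2.hpos[OF xi0] .
    have wf: "wulff \<Omega> f = polar (conv_hull_fun \<Omega> (\<lambda>x. 1 / f x))" by (rule wulff_polar[OF f_pos])
    obtain \<zeta>m where \<zeta>m: "\<zeta>m \<in> \<Omega>" "\<forall>y\<in>\<Omega>. f \<zeta>m \<le> f y"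
      using continuous_attains_inf[OF cpt S1.ne f_cont] by blast
    have mp: "f \<zeta>m > 0" using f_pos \<zeta>m by auto
    obtain Mb where Mb: "\<forall>\<zeta>\<in>\<Omega>. \<bar>b \<zeta>\<bar> \<le> Mb"
      using compact_imp_bounded[OF compact_continuous_image[OF bc cpt]]
      by (auto simp: bounded_real)
    have U2: "\<forall>\<eta>>0. \<exists>d>0. \<forall>\<epsilon>. \<epsilon> \<noteq> 0 \<and> \<bar>\<epsilon>\<bar> < d \<longrightarrow>
                  (\<forall>\<zeta>\<in>\<Omega>. \<bar>1 / fe \<epsilon> \<zeta> - 1 / f \<zeta> - \<epsilon> * (- b \<zeta> / (f \<zeta>)^2)\<bar> \<le> \<eta> * \<bar>\<epsilon>\<bar>)"
      by (rule REC[OF mp _ Mb U]) (use \<zeta>m in auto)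
    have Bc: "continuous_on \<Omega> (\<lambda>\<zeta>. - b \<zeta> / (f \<zeta>)^2)"
      using bc f_cont f_pos by (intro continuous_intros) auto
    have lim: "((\<lambda>\<epsilon>. (ln (hmax \<Omega> (\<lambda>x. 1 / fe \<epsilon> x) \<xi>) - ln (hmax \<Omega> (\<lambda>x. 1 / f x) \<xi>)) / \<epsilon>)
           \<longlongrightarrow> (- b u1 / (f u1)^2) * (\<xi> \<bullet> u1) / hmax \<Omega> (\<lambda>x. 1 / f x) \<xi>) (at 0)"
      using GD[OF cpt \<Omega>_sub nxi fi Bc u1(1,2) Hp u1(3), of "\<lambda>\<epsilon> x. 1 / fe \<epsilon> x"] U2 by simp
    have fu1: "f u1 > 0" using f_pos u1 by auto
    have xu1: "\<xi> \<bullet> u1 \<noteq> 0" using Hp u1(2) by auto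
    have val: "- ((- b u1 / (f u1)^2) * (\<xi> \<bullet> u1) / hmax \<Omega> (\<lambda>x. 1 / f x) \<xi>)
              = g u1 / (f u1 * deriv_t \<Psi> u1 (f u1))"
      using u1(2) fu1 xu1 Dne[OF u1(1)] by (simp add: b_def field_simps power2_eq_square)
    have rad0: "radial_fun (wulff \<Omega> f) \<xi> = 1 / hmax \<Omega> (\<lambda>x. 1 / f x) \<xi>"
      unfolding wf by (rule S2.radial_polar[OF xi0])
    have "((\<lambda>\<epsilon>. (ln (radial_fun (wulff \<Omega> (fe \<epsilon>)) \<xi>)
                    - ln (radial_fun (wulff \<Omega> f) \<xi>)) / \<epsilon>)
              \<longlongrightarrow> g u1 / (f u1 * deriv_t \<Psi> u1 (f u1))) (at 0)"
    proof (rule Lim_transform_eventually[OF tendsto_minus[OF lim, unfolded val]])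
      show "\<forall>\<^sub>F x in at 0. - ((ln (hmax \<Omega> (\<lambda>y. 1 / fe x y) \<xi>) - ln (hmax \<Omega> (\<lambda>x. 1 / f x) \<xi>)) / x) =
          (ln (radial_fun (wulff \<Omega> (fe x)) \<xi>) - ln (radial_fun (wulff \<Omega> f) \<xi>)) / x"
        using ev
      proof eventually_elim
        case (elim \<epsilon>)
        have pos: "\<forall>\<xi>\<in>\<Omega>. fe \<epsilon> \<xi> > 0" using \<delta> elim by auto
        have rade: "radial_fun (wulff \<Omega> (fe \<epsilon>)) \<xi> = 1 / hmax \<Omega> (\<lambda>x. 1 / fe \<epsilon> x) \<xi>"
          unfolding wulff_polar[OF pos] by (rule setting.radial_polar[OF setE[OF elim] xi0])
        have hpe: "hmax \<Omega> (\<lambda>x. 1 / fe \<epsilon> x) \<xi> > 0" by (rule setting.hpos[OF setE[OF elim] xi0])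
        have sw: "- ((A - B) / \<epsilon>) = (B - A) / \<epsilon>" for A B :: real
          by (simp add: minus_divide_left)
        show ?case unfolding rade rad0 sw using hpe Hp by (simp add: ln_div)
      qed
    qed
    then show "let u1 = radial_gauss1 (wulff \<Omega> f) \<xi> in
            ((\<lambda>\<epsilon>. (ln (radial_fun (wulff \<Omega> (fe \<epsilon>)) \<xi>)
                    - ln (radial_fun (wulff \<Omega> f) \<xi>)) / \<epsilon>)
              \<longlongrightarrow> g u1 / (f u1 * deriv_t \<Psi> u1 (f u1))) (at 0)"
      unfolding Let_def wf u1(4) .
  qed
qed


end
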